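(* Let $c>0$, $N,n,n_1,n_2,a_1,a_2,\varepsilon\in\mathbb{R}$, $D=\{\vec\gamma:\gamma_1^2+\gamma_2^2>0\}$, $\rho=\sqrt{\gamma_1^2+\gamma_2^2}$, $\mathbb{I}=\operatorname{diag}(2c,2c,c)$, let $\vec\mu$ be as follows: $$\mu_1=c\Big(-n\gamma_1-n_1\gamma_1^2+2n_1\gamma_2^2+n_1\gamma_3^2-3n_2\gamma_1\gamma_2+\frac{N\gamma_1}{\rho^{3}}\Big),\quad \mu_2=c\Big(-n\gamma_2+2n_2\gamma_1^2-n_2\gamma_2^2+n_2\gamma_3^2-3n_1\gamma_1\gamma_2+\frac{N\gamma_2}{\rho^{3}}\Big),$$ $$\mu_3=-c\gamma_3\Big(3n+5n_1\gamma_1+5n_2\gamma_2+\frac{N\gamma_3}{\rho}\Big),$$ and $U(\vec\gamma)=c(a_1\gamma_1+a_2\gamma_2)+\frac{\varepsilon}{\rho}-\frac12c\big(n+n_1\gamma_1+n_2\gamma_2+\frac N\rho\big)^2(2\gamma_1^2+2\gamma_2^2+\gamma_3^2)$. Let $$I_2=\vec M\cdot\vec\gamma+c\Big(n+n_1\gamma_1+n_2\gamma_2+\frac{N}{\rho}\Big)(2\gamma_1^2+2\gamma_2^2+\gamma_3^2).$$ (a) If $N\neq0$, then $I_2$ is not a constant of motion of the system $\dot{\vec M}=-\mathbb{I}^{-1}\vec M\times(\vec M+\vec\mu)+\vec\gamma\times\nabla_{\vec\gamma}U$, $\dot{\vec\gamma}=\vec\gamma\times\mathbb{I}^{-1}\vec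 M$ on $\mathbb{R}^3\times D$. (b) Let $\vec\mu'=(\mu_1,\mu_2,\mu_3')$ with $\mu_3'=-c\gamma_3\big(3n+5n_1\gamma_1+5n_2\gamma_2-N\frac{\gamma_3^2+1}{\rho^{3}}\big)$. Then $\vec\mu'=\psi\vec\gamma+\nabla_{\vec\gamma}\varphi$ with $\varphi=c\big(n+n_1\gamma_1+n_2\gamma_2+\frac N\rho\big)(2\gamma_1^2+2\gamma_2^2+\gamma_3^2)$ and $\psi=-c\big(5n+7n_1\gamma_1+7n_2\gamma_2+N\frac{2\rho^2-\gamma_3^2-1}{\rho^3}\big)$; hence $\Pi_{\vec\mu'}$ defines a Poisson bracket on $\mathbb{R}^3\times D$ and $I_2$ is a Casimir function of $\Pi_{\vec\mu'}$.
   Context: Coordinates on $\mathbb{R}^6$ are $(\vec M,\vec\gamma)=(M_1,M_2,M_3,\gamma_1,\gamma_2,\gamma_3)$. For a smooth $\vec\mu=(\mu_1,\mu_2,\mu_3)$ of $(\vec M,\vec\gamma)$, $\Pi_{\vec\mu}$ is the skew-symmetric $6\times6$ matrix $$\Pi_{\vec\mu}=\begin{bmatrix}0&-M_3-\mu_3&M_2+\mu_2&0&-\gamma_3&\gamma_2\\ M_3+\mu_3&0&-M_1-\mu_1&\gamma_3&0&-\gamma_1\\ -M_2-\mu_2&M_1+\mu_1&0&-\gamma_2&\gamma_1&0\\ 0&-\gamma_3&\gamma_2&0&0&0\\ \gamma_3&0&-\gamma_1&0&0&0\\ -\gamma_2&\gamma_1&0&0&0&0\end{bmatrix},$$ it "defines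 a Poisson bracket" if $\{f,g\}_{\vec\mu}=(\nabla f)^T\Pi_{\vec\mu}\nabla g$ satisfies the Jacobi identity, and a Casimir function is a smooth $C$ with $\Pi_{\vec\mu}\nabla C=0$. A constant of motion is a function constant along every solution. *)

theory Defs
  imports "HOL-Analysis.Analysis" "HOL-Analysis.Cross3"
begin

definition Mv :: "real^6 \<Rightarrow> real^3" where
  "Mv x = vector [x$1, x$2, x$3]"

definition gv :: "real^6 \<Rightarrow> real^3" where
  "gv x = vector [x$4, x$5, x$6]"

definition pack6 :: "real^3 \<Rightarrow> real^3 \<Rightarrow> real^6" where
  "pack6 M g = vector [M$1, M$2, M$3, g$1, g$2, g$3]"

definition Dset :: "(real^3) set" where
  "Dset = {g. (g$1)^2 + (g$2)^2 > 0}"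

definition Phase :: "(real^6) set" where
  "Phase = {x. gv x \<in> Dset}"

definition grad_r :: "(real^'n \<Rightarrow> real) \<Rightarrow> real^'n \<Rightarrow> real^'n" where
  "grad_r f x = (\<chi> i. frechet_derivative f (at x) (axis i 1))"

fun Ck_on :: "nat \<Rightarrow> (real^'n) set \<Rightarrow> (real^'n \<Rightarrow> real) \<Rightarrow> bool" where
  "Ck_on 0 S f = continuous_on S f"
| "Ck_on (Suc k) S f = (f differentiable_on S \<and>
      (\<forall>i. Ck_on k S (\<lambda>x. frechet_derivative f (at x) (axis i 1))))"

definition smooth_on :: "(real^'n) set \<Rightarrow> (real^'n \<Rightarrow> real) \<Rightarrow> bool" where
  "smooth_on S f = (\<forall>k. Ck_on k S f)"

definition Pi_mat :: "(real^6 \<Rightarrow> real^3) \<Rightarrow> real^6 \<Rightarrow> real^6^6" where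
  "Pi_mat mu x = (let M1 = x$1; M2 = x$2; M3 = x$3; g1 = x$4; g2 = x$5; g3 = x$6;
       m1 = mu x $ 1; m2 = mu x $ 2; m3 = mu x $ 3 in
     vector [
       vector [0, -M3-m3, M2+m2, 0, -g3, g2],
       vector [M3+m3, 0, -M1-m1, g3, 0, -g1],
       vector [-M2-m2, M1+m1, 0, -g2, g1, 0],
       vector [0, -g3, g2, 0, 0, 0],
       vector [g3, 0, -g1, 0, 0, 0],
       vector [-g2, g1, 0, 0, 0, 0]])"

definition pbracket :: "(real^6 \<Rightarrow> real^6^6) \<Rightarrow> (real^6 \<Rightarrow> real) \<Rightarrow> (real^6 \<Rightarrow> real) \<Rightarrow> real^6 \<Rightarrow> real" where
  "pbracket P f g x = grad_r f x \<bullet> (P x *v grad_r g x)"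

definition is_poisson_on :: "(real^6 \<Rightarrow> real^6^6) \<Rightarrow> (real^6) set \<Rightarrow> bool" where
  "is_poisson_on P S = (\<forall>f g h. smooth_on S f \<and> smooth_on S g \<and> smooth_on S h \<longrightarrow>
     (\<forall>x\<in>S. pbracket P f (pbracket P g h) x + pbracket P g (pbracket P h f) x
             + pbracket P h (pbracket P f g) x = 0))"

definition casimir_on :: "(real^6 \<Rightarrow> real^6^6) \<Rightarrow> (real^6) set \<Rightarrow> (real^6 \<Rightarrow> real) \<Rightarrow> bool" where
  "casimir_on P S C = (smooth_on S C \<and> (\<forall>x\<in>S. P x *v grad_r C x = 0))"

definition is_solution :: "(real^6 \<Rightarrow> real^6) \<Rightarrow> (real^6) set \<Rightarrow> (real \<Rightarrow> real^6) \<Rightarrow> real set \<Rightarrow> bool" where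
  "is_solution F S y J = (is_interval J \<and> open J \<and>
     (\<forall>t\<in>J. y t \<in> S \<and> (y has_vector_derivative F (y t)) (at t)))"

definition const_of_motion :: "(real^6 \<Rightarrow> real^6) \<Rightarrow> (real^6) set \<Rightarrow> (real^6 \<Rightarrow> real) \<Rightarrow> bool" where
  "const_of_motion F S I = (\<forall>y J. is_solution F S y J \<longrightarrow> (\<forall>s\<in>J. \<forall>t\<in>J. I (y s) = I (y t)))"

definition rho :: "real^3 \<Rightarrow> real" where
  "rho g = sqrt ((g$1)^2 + (g$2)^2)"

definition Iinv :: "real \<Rightarrow> real^3 \<Rightarrow> real^3" where
  "Iinv c M = vector [M$1 / (2*c), M$2 / (2*c), M$3 / c]"

definition mu_vec :: "real \<Rightarrow> real \<Rightarrow> real \<Rightarrow> real \<Rightarrow> real \<Rightarrow> real^3 \<Rightarrow> real^3" where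
  "mu_vec c N n n1 n2 g = (let g1 = g$1; g2 = g$2; g3 = g$3 in vector [
     c * (- n*g1 - n1*g1^2 + 2*n1*g2^2 + n1*g3^2 - 3*n2*g1*g2 + N*g1 / (rho g)^3),
     c * (- n*g2 + 2*n2*g1^2 - n2*g2^2 + n2*g3^2 - 3*n1*g1*g2 + N*g2 / (rho g)^3),
     - c * g3 * (3*n + 5*n1*g1 + 5*n2*g2 + N*g3 / rho g)])"

definition mu'_vec :: "real \<Rightarrow> real \<Rightarrow> real \<Rightarrow> real \<Rightarrow> real \<Rightarrow> real^3 \<Rightarrow> real^3" where
  "mu'_vec c N n n1 n2 g = (let g1 = g$1; g2 = g$2; g3 = g$3 in vector [
     c * (- n*g1 - n1*g1^2 + 2*n1*g2^2 + n1*g3^2 - 3*n2*g1*g2 + N*g1 / (rho g)^3),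
     c * (- n*g2 + 2*n2*g1^2 - n2*g2^2 + n2*g3^2 - 3*n1*g1*g2 + N*g2 / (rho g)^3),
     - c * g3 * (3*n + 5*n1*g1 + 5*n2*g2 - N * (g3^2 + 1) / (rho g)^3)])"

definition U_pot :: "real \<Rightarrow> real \<Rightarrow> real \<Rightarrow> real \<Rightarrow> real \<Rightarrow> real \<Rightarrow> real \<Rightarrow> real \<Rightarrow> real^3 \<Rightarrow> real" where
  "U_pot c N n n1 n2 a1 a2 \<epsilon> g = c * (a1 * g$1 + a2 * g$2) + \<epsilon> / rho g
     - 1/2 * c * (n + n1 * g$1 + n2 * g$2 + N / rho g)^2 * (2*(g$1)^2 + 2*(g$2)^2 + (g$3)^2)"

definition phi_fun :: "real \<Rightarrow> real \<Rightarrow> real \<Rightarrow> real \<Rightarrow> real \<Rightarrow> real^3 \<Rightarrow> real" where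
  "phi_fun c N n n1 n2 g = c * (n + n1 * g$1 + n2 * g$2 + N / rho g) * (2*(g$1)^2 + 2*(g$2)^2 + (g$3)^2)"

definition psi_fun :: "real \<Rightarrow> real \<Rightarrow> real \<Rightarrow> real \<Rightarrow> real \<Rightarrow> real^3 \<Rightarrow> real" where
  "psi_fun c N n n1 n2 g = - c * (5*n + 7*n1 * g$1 + 7*n2 * g$2
      + N * (2 * (rho g)^2 - (g$3)^2 - 1) / (rho g)^3)"

definition I2_fun :: "real \<Rightarrow> real \<Rightarrow> real \<Rightarrow> real \<Rightarrow> real \<Rightarrow> real^6 \<Rightarrow> real" where
  "I2_fun c N n n1 n2 x = Mv x \<bullet> gv x
     + c * (n + n1 * gv x $ 1 + n2 * gv x $ 2 + N / rho (gv x)) * (2*(gv x $ 1)^2 + 2*(gv x $ 2)^2 + (gv x $ 3)^2)"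

definition field :: "real \<Rightarrow> (real^3 \<Rightarrow> real^3) \<Rightarrow> (real^3 \<Rightarrow> real) \<Rightarrow> real^6 \<Rightarrow> real^6" where
  "field c mu U x = pack6
     (- cross3 (Iinv c (Mv x)) (Mv x + mu (gv x)) + cross3 (gv x) (grad_r U (gv x)))
     (cross3 (gv x) (Iinv c (Mv x)))"

end

theory Submission
  imports Defs
begin


lemma exhaust_6:
  fixes x :: 6
  shows "x = 1 \<or> x = 2 \<or> x = 3 \<or> x = 4 \<or> x = 5 \<or> x = 6"
proof (induct x)
  case (of_int z)
  then have "z = 0 \<or> z = 1 \<or> z = 2 \<or> z = 3 \<or> z = 4 \<or> z = 5" by fastforce
  then show ?case by auto
qed

lemma UNIV_6: "UNIV = {1, 2, 3, 4, 5, 6::6}"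
  using exhaust_6 by auto

lemma sum_6: "sum f (UNIV::6 set) = f 1 + f 2 + f 3 + f 4 + f 5 + f 6"
  unfolding UNIV_6 by (simp add: ac_simps)

lemma forall_6: "(\<forall>i::6. P i) \<longleftrightarrow> P 1 \<and> P 2 \<and> P 3 \<and> P 4 \<and> P 5 \<and> P 6"
  by (metis exhaust_6)

lemma vector_6 [simp]:
 "(vector [x1,x2,x3,x4,x5,x6] ::('a::zero)^6)$1 = x1"
 "(vector [x1,x2,x3,x4,x5,x6] ::('a::zero)^6)$2 = x2"
 "(vector [x1,x2,x3,x4,x5,x6] ::('a::zero)^6)$3 = x3"
 "(vector [x1,x2,x3,x4,x5,x6] ::('a::zero)^6)$4 = x4"
 "(vector [x1,x2,x3,x4,x5,x6] ::('a::zero)^6)$5 = x5"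
 "(vector [x1,x2,x3,x4,x5,x6] ::('a::zero)^6)$6 = x6"
  unfolding vector_def by simp_all

lemma six_distinct [simp]: "(1::6) \<noteq> 2" "(1::6) \<noteq> 3" "(1::6) \<noteq> 4" "(1::6) \<noteq> 5" "(1::6) \<noteq> 6"
  "(2::6) \<noteq> 3" "(2::6) \<noteq> 4" "(2::6) \<noteq> 5" "(2::6) \<noteq> 6" "(3::6) \<noteq> 4" "(3::6) \<noteq> 5" "(3::6) \<noteq> 6"
  "(4::6) \<noteq> 5" "(4::6) \<noteq> 6" "(5::6) \<noteq> 6"
  by simp_all



definition pd :: "(real^'n \<Rightarrow> real) \<Rightarrow> 'n \<Rightarrow> real^'n \<Rightarrow> real" where
  "pd f i x = frechet_derivative f (at x) (axis i 1)"

lemma pd_has: "(f has_derivative D) (at x) \<Longrightarrow> pd f i x = D (axis i 1)"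
  unfolding pd_def using frechet_derivative_at by metis

lemma line_deriv:
  fixes h :: "real^'n \<Rightarrow> real"
  assumes "h differentiable (at (y + a *\<^sub>R e))"
  shows "((\<lambda>t. h (y + t *\<^sub>R e)) has_real_derivative frechet_derivative h (at (y + a *\<^sub>R e)) e) (at a)"
proof -
  let ?F = "frechet_derivative h (at (y + a *\<^sub>R e))"
  have hF: "(h has_derivative ?F) (at (y + a *\<^sub>R e))"
    using assms frechet_derivative_works by blast
  have lin: "linear ?F" using hF has_derivative_linear by blast
  have l: "((\<lambda>t. y + t *\<^sub>R e) has_derivative (\<lambda>t. t *\<^sub>R e)) (at a)"
    by (auto intro!: derivative_eq_intros)
  have "((\<lambda>t. h (y + t *\<^sub>R e)) has_derivative (\<lambda>t. ?F (t *\<^sub>R e))) (at a)"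
    using has_derivative_compose[OF l hF] by (simp add: o_def)
  moreover have "(\<lambda>t. ?F (t *\<^sub>R e)) = (*) (?F e)"
    using lin by (auto simp: linear_scale mult.commute)
  ultimately show ?thesis unfolding has_field_derivative_def by simp
qed

lemma line_deriv_pd:
  fixes h :: "real^'n \<Rightarrow> real"
  assumes "h differentiable (at (y + a *\<^sub>R axis l 1))"
  shows "((\<lambda>t. h (y + t *\<^sub>R axis l 1)) has_real_derivative pd h l (y + a *\<^sub>R axis l 1)) (at a)"
  using line_deriv[OF assms] unfolding pd_def .

lemma norm_axis1: "norm (axis l (1::real) :: real^'n) = 1"
  by simp

lemma second_diff:
  fixes h :: "real^'n \<Rightarrow> real"
  assumes s: "s > 0"
    and dh: "\<And>y. norm (y - x) \<le> 2 * s \<Longrightarrow> h differentiable (at y)"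
    and dhl: "\<And>y. norm (y - x) \<le> 2 * s \<Longrightarrow> pd h l differentiable (at y)"
  shows "\<exists>p. norm (p - x) \<le> 2 * s \<and>
     h (x + s *\<^sub>R axis l 1 + s *\<^sub>R axis j 1) - h (x + s *\<^sub>R axis l 1) - h (x + s *\<^sub>R axis j 1) + h x
       = s * s * pd (pd h l) j p"
proof -
  define e where "e = (axis l 1 :: real^'n)"
  define d where "d = (axis j 1 :: real^'n)"
  have ne: "norm e = 1" "norm d = 1" unfolding e_def d_def by (simp_all add: norm_axis1)
  have bnd: "norm ((x + a *\<^sub>R e + b *\<^sub>R d) - x) \<le> 2 * s" if "0 \<le> a" "a \<le> s" "0 \<le> b" "b \<le> s" for a b
  proof -
    have "norm ((x + a *\<^sub>R e + b *\<^sub>R d) - x) = norm (a *\<^sub>R e + b *\<^sub>R d)" by simp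
    also have "\<dots> \<le> norm (a *\<^sub>R e) + norm (b *\<^sub>R d)" by (rule norm_triangle_ineq)
    also have "\<dots> = \<bar>a\<bar> + \<bar>b\<bar>" using ne by simp
    finally show ?thesis using that by simp
  qed
  define phi where "phi a = h (x + s *\<^sub>R d + a *\<^sub>R e) - h (x + a *\<^sub>R e)" for a
  have "\<exists>z. 0 < z \<and> z < s \<and> phi s - phi 0 = (s - 0) * (pd h l (x + s *\<^sub>R d + z *\<^sub>R e) - pd h l (x + z *\<^sub>R e))"
  proof (rule MVT2[OF s])
    fix a assume a: "0 \<le> a" "a \<le> s"
    have d1: "h differentiable (at (x + s *\<^sub>R d + a *\<^sub>R e))"
      using dh bnd[OF a, of s] s by (simp add: algebra_simps)
    have d2: "h differentiable (at (x + a *\<^sub>R e))"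
      using dh bnd[OF a, of 0] s by (simp add: algebra_simps)
    show "(phi has_real_derivative (pd h l (x + s *\<^sub>R d + a *\<^sub>R e) - pd h l (x + a *\<^sub>R e))) (at a)"
      unfolding phi_def e_def
      by (intro DERIV_diff line_deriv_pd) (use d1 d2 in \<open>simp_all add: e_def\<close>)
  qed
  then obtain z where z: "0 < z" "z < s"
    and zeq: "phi s - phi 0 = s * (pd h l (x + s *\<^sub>R d + z *\<^sub>R e) - pd h l (x + z *\<^sub>R e))" by auto
  define psi where "psi b = pd h l (x + z *\<^sub>R e + b *\<^sub>R d)" for b
  have "\<exists>w. 0 < w \<and> w < s \<and> psi s - psi 0 = (s - 0) * pd (pd h l) j (x + z *\<^sub>R e + w *\<^sub>R d)"
  proof (rule MVT2[OF s])
    fix b assume b: "0 \<le> b" "b \<le> s"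
    have "pd h l differentiable (at (x + z *\<^sub>R e + b *\<^sub>R d))"
      using dhl bnd[of z b] z b by simp
    then show "(psi has_real_derivative pd (pd h l) j (x + z *\<^sub>R e + b *\<^sub>R d)) (at b)"
      unfolding psi_def d_def by (intro line_deriv_pd) (simp add: d_def)
  qed
  then obtain w where w: "0 < w" "w < s"
    and weq: "psi s - psi 0 = s * pd (pd h l) j (x + z *\<^sub>R e + w *\<^sub>R d)" by auto
  show ?thesis
  proof (intro exI conjI)
    show "norm ((x + z *\<^sub>R e + w *\<^sub>R d) - x) \<le> 2 * s" using bnd[of z w] z w by simp
    have "h (x + s *\<^sub>R e + s *\<^sub>R d) - h (x + s *\<^sub>R e) - h (x + s *\<^sub>R d) + h x = phi s - phi 0"
      unfolding phi_def by (simp add: algebra_simps)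
    also have "\<dots> = s * (psi s - psi 0)"
      unfolding zeq psi_def by (simp add: algebra_simps)
    also have "\<dots> = s * s * pd (pd h l) j (x + z *\<^sub>R e + w *\<^sub>R d)" using weq by simp
    finally show "h (x + s *\<^sub>R axis l 1 + s *\<^sub>R axis j 1) - h (x + s *\<^sub>R axis l 1) - h (x + s *\<^sub>R axis j 1) + h x
       = s * s * pd (pd h l) j (x + z *\<^sub>R e + w *\<^sub>R d)" unfolding e_def d_def .
  qed
qed

lemma schwarz:
  fixes h :: "real^'n \<Rightarrow> real"
  assumes S: "open S" "x \<in> S"
    and dh: "\<And>y. y \<in> S \<Longrightarrow> h differentiable (at y)"
    and dhl: "\<And>y. y \<in> S \<Longrightarrow> pd h l differentiable (at y)"
    and dhj: "\<And>y. y \<in> S \<Longrightarrow> pd h j differentiable (at y)"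
    and c1: "continuous (at x) (pd (pd h l) j)"
    and c2: "continuous (at x) (pd (pd h j) l)"
  shows "pd (pd h l) j x = pd (pd h j) l x"
proof (rule ccontr)
  assume ne: "pd (pd h l) j x \<noteq> pd (pd h j) l x"
  define eps where "eps = \<bar>pd (pd h l) j x - pd (pd h j) l x\<bar> / 2"
  have eps: "eps > 0" using ne unfolding eps_def by simp
  obtain d0 where d0: "d0 > 0" "ball x d0 \<subseteq> S" using S open_contains_ball by blast
  obtain d1 where d1: "d1 > 0" "\<And>y. dist y x < d1 \<Longrightarrow> dist (pd (pd h l) j y) (pd (pd h l) j x) < eps"
    using c1 eps unfolding continuous_at_eps_delta by blast
  obtain d2 where d2: "d2 > 0" "\<And>y. dist y x < d2 \<Longrightarrow> dist (pd (pd h j) l y) (pd (pd h j) l x) < eps"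
    using c2 eps unfolding continuous_at_eps_delta by blast
  define s where "s = min d0 (min d1 d2) / 3"
  have s: "s > 0" using d0 d1 d2 unfolding s_def by simp
  have inS: "y \<in> S" if "norm (y - x) \<le> 2 * s" for y
  proof -
    have "norm (y - x) < d0" using that s d0(1) unfolding s_def by linarith
    then have "dist x y < d0" by (simp add: dist_norm norm_minus_commute)
    then show ?thesis using d0 by auto
  qed
  obtain p where p: "norm (p - x) \<le> 2 * s" and peq:
     "h (x + s *\<^sub>R axis l 1 + s *\<^sub>R axis j 1) - h (x + s *\<^sub>R axis l 1) - h (x + s *\<^sub>R axis j 1) + h x
       = s * s * pd (pd h l) j p"
    using second_diff[OF s, of x h l j] inS dh dhl by blast
  obtain q where q: "norm (q - x) \<le> 2 * s" and qeq:
     "h (x + s *\<^sub>R axis j 1 + s *\<^sub>R axis l 1) - h (x + s *\<^sub>R axis j 1) - h (x + s *\<^sub>R axis l 1) + h x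
       = s * s * pd (pd h j) l q"
    using second_diff[OF s, of x h j l] inS dh dhj by blast
  have "s * s * pd (pd h l) j p = s * s * pd (pd h j) l q"
    using peq qeq by (simp add: algebra_simps)
  then have pq: "pd (pd h l) j p = pd (pd h j) l q" using s by simp
  have "norm (p - x) < d1" using p s d1(1) unfolding s_def by linarith
  then have "dist p x < d1" by (simp add: dist_norm)
  then have A: "\<bar>pd (pd h l) j p - pd (pd h l) j x\<bar> < eps" using d1 by (simp add: dist_real_def)
  have "norm (q - x) < d2" using q s d2(1) unfolding s_def by linarith
  then have "dist q x < d2" by (simp add: dist_norm)
  then have B: "\<bar>pd (pd h j) l q - pd (pd h j) l x\<bar> < eps" using d2 by (simp add: dist_real_def)
  show False using A B pq unfolding eps_def by (simp add: abs_if split: if_splits)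
qed



lemma perm4:
  fixes X :: "'n \<Rightarrow> 'n \<Rightarrow> 'n \<Rightarrow> 'n \<Rightarrow> real"
  shows "(\<Sum>i\<in>UNIV. \<Sum>j\<in>UNIV. \<Sum>a\<in>UNIV. \<Sum>b\<in>UNIV. X b a i j) = (\<Sum>i\<in>UNIV. \<Sum>j\<in>UNIV. \<Sum>a\<in>UNIV. \<Sum>b\<in>UNIV. X i j a b)"
proof -
  have "(\<Sum>p\<in>UNIV. \<Sum>q\<in>UNIV. \<Sum>r\<in>UNIV. \<Sum>s\<in>UNIV. X s r p q) = (\<Sum>p\<in>UNIV. \<Sum>q\<in>UNIV. \<Sum>s\<in>UNIV. \<Sum>r\<in>UNIV. X s r p q)"
    by (rule sum.cong[OF refl], rule sum.cong[OF refl], rule sum.swap)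
  also have "\<dots> = (\<Sum>p\<in>UNIV. \<Sum>s\<in>UNIV. \<Sum>q\<in>UNIV. \<Sum>r\<in>UNIV. X s r p q)"
    by (rule sum.cong[OF refl], rule sum.swap)
  also have "\<dots> = (\<Sum>s\<in>UNIV. \<Sum>p\<in>UNIV. \<Sum>q\<in>UNIV. \<Sum>r\<in>UNIV. X s r p q)"
    by (rule sum.swap)
  also have "\<dots> = (\<Sum>s\<in>UNIV. \<Sum>p\<in>UNIV. \<Sum>r\<in>UNIV. \<Sum>q\<in>UNIV. X s r p q)"
    by (rule sum.cong[OF refl], rule sum.cong[OF refl], rule sum.swap)
  also have "\<dots> = (\<Sum>s\<in>UNIV. \<Sum>r\<in>UNIV. \<Sum>p\<in>UNIV. \<Sum>q\<in>UNIV. X s r p q)"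
    by (rule sum.cong[OF refl], rule sum.swap)
  finally show ?thesis .
qed

lemma perm3:
  fixes X :: "'n \<Rightarrow> 'n \<Rightarrow> 'n \<Rightarrow> real"
  shows "(\<Sum>i\<in>UNIV. \<Sum>a\<in>UNIV. \<Sum>b\<in>UNIV. X b i a) = (\<Sum>i\<in>UNIV. \<Sum>a\<in>UNIV. \<Sum>b\<in>UNIV. X i a b)"
proof -
  have "(\<Sum>p\<in>UNIV. \<Sum>q\<in>UNIV. \<Sum>r\<in>UNIV. X r p q) = (\<Sum>p\<in>UNIV. \<Sum>r\<in>UNIV. \<Sum>q\<in>UNIV. X r p q)"
    by (rule sum.cong[OF refl], rule sum.swap)
  also have "\<dots> = (\<Sum>r\<in>UNIV. \<Sum>p\<in>UNIV. \<Sum>q\<in>UNIV. X r p q)"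
    by (rule sum.swap)
  finally show ?thesis .
qed

lemma jmove:
  fixes X :: "'n \<Rightarrow> 'n \<Rightarrow> 'n \<Rightarrow> 'n \<Rightarrow> real"
  shows "(\<Sum>i\<in>UNIV. \<Sum>j\<in>UNIV. \<Sum>a\<in>UNIV. \<Sum>b\<in>UNIV. X i j a b) = (\<Sum>i\<in>UNIV. \<Sum>a\<in>UNIV. \<Sum>b\<in>UNIV. \<Sum>j\<in>UNIV. X i j a b)"
proof -
  have "(\<Sum>i\<in>UNIV. \<Sum>j\<in>UNIV. \<Sum>a\<in>UNIV. \<Sum>b\<in>UNIV. X i j a b) = (\<Sum>i\<in>UNIV. \<Sum>a\<in>UNIV. \<Sum>j\<in>UNIV. \<Sum>b\<in>UNIV. X i j a b)"
    by (rule sum.cong[OF refl], rule sum.swap)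
  also have "\<dots> = (\<Sum>i\<in>UNIV. \<Sum>a\<in>UNIV. \<Sum>b\<in>UNIV. \<Sum>j\<in>UNIV. X i j a b)"
    by (rule sum.cong[OF refl], rule sum.cong[OF refl], rule sum.swap)
  finally show ?thesis .
qed

definition Tbr :: "('n \<Rightarrow> real) \<Rightarrow> ('n \<Rightarrow> real) \<Rightarrow> ('n \<Rightarrow> 'n \<Rightarrow> real) \<Rightarrow> ('n \<Rightarrow> real) \<Rightarrow> ('n \<Rightarrow> 'n \<Rightarrow> real)
   \<Rightarrow> ('n \<Rightarrow> 'n \<Rightarrow> real) \<Rightarrow> ('n \<Rightarrow> 'n \<Rightarrow> 'n \<Rightarrow> real) \<Rightarrow> real" where
  "Tbr F G G2 H H2 P D = (\<Sum>i\<in>UNIV. F i * (\<Sum>j\<in>UNIV. P i j * (\<Sum>a\<in>UNIV. \<Sum>b\<in>UNIV.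
      G2 a j * P a b * H b + G a * D j a b * H b + G a * P a b * H2 b j)))"

definition T1 :: "('n \<Rightarrow> real) \<Rightarrow> ('n \<Rightarrow> real) \<Rightarrow> ('n \<Rightarrow> 'n \<Rightarrow> real) \<Rightarrow> ('n \<Rightarrow> real) \<Rightarrow> ('n \<Rightarrow> 'n \<Rightarrow> real) \<Rightarrow> real" where "T1 F G G2 H P = (\<Sum>i\<in>UNIV. \<Sum>j\<in>UNIV. \<Sum>a\<in>UNIV. \<Sum>b\<in>UNIV. F i * P i j * G2 a j * P a b * (H b::real))"
definition T2 :: "('n \<Rightarrow> real) \<Rightarrow> ('n \<Rightarrow> real) \<Rightarrow> ('n \<Rightarrow> real) \<Rightarrow> ('n \<Rightarrow> 'n \<Rightarrow> real) \<Rightarrow> ('n \<Rightarrow> 'n \<Rightarrow> 'n \<Rightarrow> real) \<Rightarrow> real" where "T2 F G H P D = (\<Sum>i\<in>UNIV. \<Sum>j\<in>UNIV. \<Sum>a\<in>UNIV. \<Sum>b\<in>UNIV. F i * P i j * G a * D j a b * (H b::real))"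
definition T3 :: "('n \<Rightarrow> real) \<Rightarrow> ('n \<Rightarrow> real) \<Rightarrow> ('n \<Rightarrow> real) \<Rightarrow> ('n \<Rightarrow> 'n \<Rightarrow> real) \<Rightarrow> ('n \<Rightarrow> 'n \<Rightarrow> real) \<Rightarrow> real" where "T3 F G H H2 P = (\<Sum>i\<in>UNIV. \<Sum>j\<in>UNIV. \<Sum>a\<in>UNIV. \<Sum>b\<in>UNIV. F i * P i j * G a * P a b * (H2 b j::real))"

lemma Tbr_split: "Tbr F G G2 H H2 P D = T1 F G G2 H P + T2 F G H P D + T3 F G H H2 P"
  unfolding Tbr_def T1_def T2_def T3_def
  by (simp add: sum_distrib_left sum.distrib algebra_simps)

lemma T31:
  assumes sym: "\<And>i j. H2 i j = H2 j i" and anti: "\<And>a b. P a b = - P b a"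
  shows "T3 F G H H2 P + T1 G H H2 F P = 0"
proof -
  have "T1 G H H2 F P = (\<Sum>i\<in>UNIV. \<Sum>j\<in>UNIV. \<Sum>a\<in>UNIV. \<Sum>b\<in>UNIV. - (F b * P b a * G i * P i j * H2 j a))"
  proof -
    have pw: "G i * P i j * H2 a j * P a b * F b = - (F b * P b a * G i * P i j * H2 j a)" for i j a b
      using anti[of a b] sym[of a j] by simp
    show ?thesis unfolding T1_def by (simp only: pw)
  qed
  also have "\<dots> = (\<Sum>i\<in>UNIV. \<Sum>j\<in>UNIV. \<Sum>a\<in>UNIV. \<Sum>b\<in>UNIV. - (F i * P i j * G a * P a b * H2 b j))"
    by (rule perm4[where X = "\<lambda>i j a b. - (F i * P i j * G a * P a b * H2 b j)"])
  finally show ?thesis unfolding T3_def by (simp add: sum_negf)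
qed

lemma T2sum:
  assumes J: "\<And>i a b. (\<Sum>j\<in>UNIV. P i j * D j a b + P a j * D j b i + P b j * D j i a) = 0"
  shows "T2 F G H P D + T2 G H F P D + T2 H F G P D = 0"
proof -
  define K where "K i a b = (\<Sum>j\<in>UNIV. P i j * D j a b)" for i a b
  have e: "T2 F G H P D = (\<Sum>i\<in>UNIV. \<Sum>a\<in>UNIV. \<Sum>b\<in>UNIV. F i * G a * H b * K i a b)"
    for F G H
  proof -
    have "T2 F G H P D = (\<Sum>i\<in>UNIV. \<Sum>a\<in>UNIV. \<Sum>b\<in>UNIV. \<Sum>j\<in>UNIV. F i * P i j * G a * D j a b * H b)"
      unfolding T2_def by (rule jmove[where X="\<lambda>i j a b. F i * P i j * G a * D j a b * H b"])
    also have "\<dots> = (\<Sum>i\<in>UNIV. \<Sum>a\<in>UNIV. \<Sum>b\<in>UNIV. F i * G a * H b * K i a b)"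
      by (simp add: K_def sum_distrib_left mult_ac)
    finally show ?thesis .
  qed
  have e2: "T2 G H F P D = (\<Sum>i\<in>UNIV. \<Sum>a\<in>UNIV. \<Sum>b\<in>UNIV. F i * G a * H b * K a b i)"
  proof -
    have "T2 G H F P D = (\<Sum>i\<in>UNIV. \<Sum>a\<in>UNIV. \<Sum>b\<in>UNIV. (\<lambda>i a b. F i * G a * H b * K a b i) b i a)"
      unfolding e by (simp add: mult_ac)
    also have "\<dots> = (\<Sum>i\<in>UNIV. \<Sum>a\<in>UNIV. \<Sum>b\<in>UNIV. F i * G a * H b * K a b i)"
      by (rule perm3)
    finally show ?thesis .
  qed
  have e3: "T2 H F G P D = (\<Sum>i\<in>UNIV. \<Sum>a\<in>UNIV. \<Sum>b\<in>UNIV. F i * G a * H b * K b i a)"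
  proof -
    have "T2 H F G P D = (\<Sum>i\<in>UNIV. \<Sum>a\<in>UNIV. \<Sum>b\<in>UNIV. (\<lambda>i a b. H i * F a * G b * K i a b) i a b)"
      unfolding e by simp
    also have "\<dots> = (\<Sum>i\<in>UNIV. \<Sum>a\<in>UNIV. \<Sum>b\<in>UNIV. (\<lambda>i a b. H i * F a * G b * K i a b) b i a)"
      by (rule perm3[symmetric])
    finally show ?thesis by (simp add: mult_ac)
  qed
  have ee: "T2 F G H P D = (\<Sum>i\<in>UNIV. \<Sum>a\<in>UNIV. \<Sum>b\<in>UNIV. F i * G a * H b * K i a b)" by (rule e)
  have "T2 F G H P D + T2 G H F P D + T2 H F G P D
     = (\<Sum>i\<in>UNIV. \<Sum>a\<in>UNIV. \<Sum>b\<in>UNIV. F i * G a * H b * (K i a b + K a b i + K b i a))"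
    unfolding e2 e3 ee by (simp add: sum.distrib algebra_simps)
  also have "\<dots> = 0"
    using J by (simp add: K_def sum.distrib[symmetric])
  finally show ?thesis .
qed

lemma jac_alg:
  assumes sF: "\<And>i j. F2 i j = F2 j i" and sG: "\<And>i j. G2 i j = G2 j i" and sH: "\<And>i j. H2 i j = H2 j i"
    and anti: "\<And>a b. P a b = - P b a"
    and J: "\<And>i a b. (\<Sum>j\<in>UNIV. P i j * D j a b + P a j * D j b i + P b j * D j i a) = 0"
  shows "Tbr F G G2 H H2 P D + Tbr G H H2 F F2 P D + Tbr H F F2 G G2 P D = (0::real)"
  using T31[of H2 P F G H, OF sH anti] T31[of F2 P G H F, OF sF anti]
    T31[of G2 P H F G, OF sG anti] T2sum[of P D F G H, OF J]
  unfolding Tbr_split by linarith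



lemma smooth_pd: "smooth_on S u \<Longrightarrow> smooth_on S (pd u i)"
  unfolding smooth_on_def
proof
  fix k assume "\<forall>k. Ck_on k S u"
  then have "Ck_on (Suc k) S u" by blast
  then show "Ck_on k S (pd u i)" unfolding pd_def by simp
qed

lemma smooth_diff: "open S \<Longrightarrow> smooth_on S u \<Longrightarrow> y \<in> S \<Longrightarrow> u differentiable (at y)"
  unfolding smooth_on_def
  by (metis Ck_on.simps(2) differentiable_on_eq_differentiable_at)

lemma smooth_cont: "open S \<Longrightarrow> smooth_on S u \<Longrightarrow> y \<in> S \<Longrightarrow> continuous (at y) u"
  unfolding smooth_on_def
  by (metis Ck_on.simps(1) continuous_on_eq_continuous_at)

lemma smooth_sym:
  assumes "open S" "x \<in> S" "smooth_on S u"
  shows "pd (pd u i) j x = pd (pd u j) i x"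
proof (rule schwarz[OF assms(1,2)])
  show "\<And>y. y \<in> S \<Longrightarrow> u differentiable (at y)" using smooth_diff assms by blast
  show "\<And>y. y \<in> S \<Longrightarrow> pd u i differentiable (at y)" using smooth_diff[OF assms(1) smooth_pd[OF assms(3)]] by blast
  show "\<And>y. y \<in> S \<Longrightarrow> pd u j differentiable (at y)" using smooth_diff[OF assms(1) smooth_pd[OF assms(3)]] by blast
  show "continuous (at x) (pd (pd u i) j)" using smooth_cont[OF assms(1) smooth_pd[OF smooth_pd[OF assms(3)]] assms(2)] by blast
  show "continuous (at x) (pd (pd u j) i)" using smooth_cont[OF assms(1) smooth_pd[OF smooth_pd[OF assms(3)]] assms(2)] by blast
qed

lemma pbracket_sum: "pbracket P g h y = (\<Sum>a\<in>UNIV. \<Sum>b\<in>UNIV. pd g a y * P y $ a $ b * pd h b y)"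
  unfolding pbracket_def grad_r_def inner_vec_def matrix_vector_mult_def pd_def
  by (simp add: sum_distrib_left mult.assoc)

lemma fdw: "f differentiable (at x) \<Longrightarrow> (f has_derivative frechet_derivative f (at x)) (at x)"
  using frechet_derivative_works by blast

lemma br_deriv:
  fixes P :: "real^6 \<Rightarrow> real^6^6"
  assumes dg: "\<And>a. pd g a differentiable (at x)" and dh: "\<And>b. pd h b differentiable (at x)"
    and dP: "\<And>a b. (\<lambda>y. P y $ a $ b) differentiable (at x)"
  shows "pd (pbracket P g h) j x = (\<Sum>a\<in>UNIV. \<Sum>b\<in>UNIV.
      pd (pd g a) j x * P x $ a $ b * pd h b x + pd g a x * pd (\<lambda>y. P y $ a $ b) j x * pd h b x
      + pd g a x * P x $ a $ b * pd (pd h b) j x)"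
proof -
  have eq: "pbracket P g h = (\<lambda>y. \<Sum>a\<in>UNIV. \<Sum>b\<in>UNIV. pd g a y * P y $ a $ b * pd h b y)"
    by (rule ext, rule pbracket_sum)
  have "((\<lambda>y. \<Sum>a\<in>UNIV. \<Sum>b\<in>UNIV. pd g a y * P y $ a $ b * pd h b y) has_derivative
     (\<lambda>v. \<Sum>a\<in>UNIV. \<Sum>b\<in>UNIV. pd g a x * P x $ a $ b * frechet_derivative (pd h b) (at x) v
        + (pd g a x * frechet_derivative (\<lambda>y. P y $ a $ b) (at x) v
           + frechet_derivative (pd g a) (at x) v * P x $ a $ b) * pd h b x)) (at x)"
    by (intro has_derivative_sum has_derivative_mult fdw dg dh dP)
  then show ?thesis unfolding eq
    by (subst pd_has, assumption) (simp add: pd_def distrib_left distrib_right sum.distrib)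
qed

theorem jacobi_general:
  fixes P :: "real^6 \<Rightarrow> real^6^6"
  assumes S: "open S" "x \<in> S"
    and sf: "smooth_on S f" and sg: "smooth_on S g" and sh: "smooth_on S h"
    and dP: "\<And>a b. (\<lambda>y. P y $ a $ b) differentiable (at x)"
    and anti: "\<And>a b. P x $ a $ b = - P x $ b $ a"
    and J: "\<And>i a b. (\<Sum>j\<in>UNIV. P x $ i $ j * pd (\<lambda>y. P y $ a $ b) j x
              + P x $ a $ j * pd (\<lambda>y. P y $ b $ i) j x + P x $ b $ j * pd (\<lambda>y. P y $ i $ a) j x) = 0"
  shows "pbracket P f (pbracket P g h) x + pbracket P g (pbracket P h f) x
             + pbracket P h (pbracket P f g) x = 0"
proof -
  have d1: "pd u a differentiable (at x)" if "smooth_on S u" for u a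
    using smooth_diff[OF S(1) smooth_pd[OF that] S(2)] .
  define F where "F i = pd f i x" for i
  define G where "G i = pd g i x" for i
  define H where "H i = pd h i x" for i
  define F2 where "F2 i j = pd (pd f i) j x" for i j
  define G2 where "G2 i j = pd (pd g i) j x" for i j
  define H2 where "H2 i j = pd (pd h i) j x" for i j
  define PP where "PP a b = P x $ a $ b" for a b
  define D where "D j a b = pd (\<lambda>y. P y $ a $ b) j x" for j a b
  have br: "pbracket P u (pbracket P v w) x = Tbr U V V2 W W2 PP D"
    if "smooth_on S v" "smooth_on S w" "U = (\<lambda>i. pd u i x)" "V = (\<lambda>i. pd v i x)" "W = (\<lambda>i. pd w i x)"
       "V2 = (\<lambda>i j. pd (pd v i) j x)" "W2 = (\<lambda>i j. pd (pd w i) j x)" for u v w U V W V2 W2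
  proof -
    have "pbracket P u (pbracket P v w) x = (\<Sum>i\<in>UNIV. \<Sum>j\<in>UNIV. pd u i x * P x $ i $ j * pd (pbracket P v w) j x)"
      by (rule pbracket_sum)
    also have "\<dots> = (\<Sum>i\<in>UNIV. pd u i x * (\<Sum>j\<in>UNIV. P x $ i $ j * pd (pbracket P v w) j x))"
      by (simp add: sum_distrib_left mult.assoc)
    also have "\<dots> = Tbr U V V2 W W2 PP D"
      unfolding Tbr_def that(3-7) br_deriv[OF d1[OF that(1)] d1[OF that(2)] dP] PP_def D_def by (rule refl)
    finally show ?thesis .
  qed
  have "Tbr F G G2 H H2 PP D + Tbr G H H2 F F2 PP D + Tbr H F F2 G G2 PP D = 0"
  proof (rule jac_alg)
    show "F2 i j = F2 j i" for i j unfolding F2_def using smooth_sym[OF S sf] .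
    show "G2 i j = G2 j i" for i j unfolding G2_def using smooth_sym[OF S sg] .
    show "H2 i j = H2 j i" for i j unfolding H2_def using smooth_sym[OF S sh] .
    show "PP a b = - PP b a" for a b unfolding PP_def using anti .
    show "(\<Sum>j\<in>UNIV. PP i j * D j a b + PP a j * D j b i + PP b j * D j i a) = 0" for i a b
      unfolding PP_def D_def using J .
  qed
  then show ?thesis
    using br[OF sg sh] br[OF sh sf] br[OF sf sg]
    unfolding F_def G_def H_def F2_def G2_def H2_def by simp
qed



lemma axis6 [simp]: "axis (i::6) (1::real) $ k = (if k = i then 1 else 0)"
  by (simp add: axis_def)

lemma J_Pi:
  fixes x :: "real^6" and mu :: "real^6 \<Rightarrow> real^3" and m11 m12 m13 m21 m22 m23 m31 m32 m33 :: real
  defines "dm \<equiv> (\<lambda>j::6. if j = 4 then vector [m11, m21, m31] else if j = 5 then vector [m12, m22, m32]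
                  else if j = 6 then vector [m13, m23, m33] else (0::real^3))"
  defines "D \<equiv> (\<lambda>j a b. Pi_mat (\<lambda>_. dm j) (axis j 1) $ a $ b)"
  assumes curl: "x $ 5 * m31 - x $ 6 * m21 + (x $ 6 * m12 - x $ 4 * m32) + (x $ 4 * m23 - x $ 5 * m13) = 0"
  shows "(\<Sum>j\<in>UNIV. Pi_mat mu x $ i $ j * D j a b
              + Pi_mat mu x $ a $ j * D j b i + Pi_mat mu x $ b $ j * D j i a) = 0"
  using exhaust_6[of i] exhaust_6[of a] exhaust_6[of b]
  apply (elim disjE)
  apply (simp_all add: sum_6 D_def dm_def Pi_mat_def Let_def)
  using curl by linarith+


lemma axis3 [simp]: "axis (i::3) (1::real) $ k = (if k = i then 1 else 0)"
  by (simp add: axis_def)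

lemma vec_nth_has_derivative [derivative_intros]:
  "((\<lambda>x. x $ i) has_derivative (\<lambda>h. h $ i)) F"
  by (rule bounded_linear_imp_has_derivative[OF bounded_linear_vec_nth])

lemma vec_nth_differentiable [derivative_intros]: "(\<lambda>x. x $ i) differentiable F"
  using vec_nth_has_derivative differentiable_def by blast

lemma rho_pos: "g \<in> Dset \<Longrightarrow> rho g > 0"
  unfolding Dset_def rho_def by simp

lemma rho_nz [simp]: "g \<in> Dset \<Longrightarrow> rho g \<noteq> 0"
  using rho_pos by force

lemma rho_sq: "(rho g)^2 = (g$1)^2 + (g$2)^2"
  unfolding rho_def by simp

lemma rho_deriv [derivative_intros]:
  assumes "g \<in> Dset"
  shows "(rho has_derivative (\<lambda>h. (g$1 * h$1 + g$2 * h$2) / rho g)) (at g)"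
proof -
  have p: "0 < (g$1)^2 + (g$2)^2" using assms unfolding Dset_def by simp
  have "((\<lambda>x. sqrt ((x$1)^2 + (x$2)^2)) has_derivative
        (\<lambda>h. (inverse (sqrt ((g$1)^2 + (g$2)^2)) / 2) * (2 * g$1 * h$1 + 2 * g$2 * h$2))) (at g)"
    using p by (auto intro!: derivative_eq_intros simp: algebra_simps)
  then show ?thesis unfolding rho_def[abs_def]
  proof (rule has_derivative_eq_rhs)
    have "(g$1)^2 + (g$2)^2 \<noteq> 0" using p by linarith
    then show "(\<lambda>h::real^3. (inverse (sqrt ((g$1)^2 + (g$2)^2)) / 2) * (2 * g$1 * h$1 + 2 * g$2 * h$2)) = (\<lambda>h. (g$1 * h$1 + g$2 * h$2) / sqrt ((g$1)^2 + (g$2)^2))"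
      by (simp add: fun_eq_iff field_simps)
  qed
qed

lemma pd_via: "(f has_derivative D) (at x) \<Longrightarrow> D (axis k 1) = v \<Longrightarrow> pd f k x = v"
  using pd_has by metis

lemma rho_differentiable [derivative_intros]: "g \<in> Dset \<Longrightarrow> rho differentiable (at g)"
  using rho_deriv differentiable_def by blast

context
  fixes c N n n1 n2 :: real
begin

lemma mu'_1: "(\<lambda>g. mu'_vec c N n n1 n2 g $ 1) = (\<lambda>g. c * (- n*g$1 - n1*(g$1)^2 + 2*n1*(g$2)^2 + n1*(g$3)^2 - 3*n2*g$1*g$2 + N*g$1 / (rho g)^3))"
  unfolding mu'_vec_def Let_def by simp
lemma mu'_2: "(\<lambda>g. mu'_vec c N n n1 n2 g $ 2) = (\<lambda>g. c * (- n*g$2 + 2*n2*(g$1)^2 - n2*(g$2)^2 + n2*(g$3)^2 - 3*n1*g$1*g$2 + N*g$2 / (rho g)^3))"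
  unfolding mu'_vec_def Let_def by simp
lemma mu'_3: "(\<lambda>g. mu'_vec c N n n1 n2 g $ 3) = (\<lambda>g. - c * g$3 * (3*n + 5*n1*g$1 + 5*n2*g$2 - N * ((g$3)^2 + 1) / (rho g)^3))"
  unfolding mu'_vec_def Let_def by simp

lemma mu'_diff: "g \<in> Dset \<Longrightarrow> (\<lambda>g. mu'_vec c N n n1 n2 g $ l) differentiable (at g)"
proof -
  assume g: "g \<in> Dset"
  have "l = 1 \<or> l = 2 \<or> l = 3" using exhaust_3 by blast
  then show ?thesis
    by (elim disjE; simp only: mu'_1 mu'_2 mu'_3; auto intro!: derivative_intros simp: g)
qed

lemma m12: "g \<in> Dset \<Longrightarrow> pd (\<lambda>g. mu'_vec c N n n1 n2 g $ 1) 2 g = c * (4*n1*g$2 - 3*n2*g$1 - 3*N*g$1*g$2/(rho g)^5)"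
  unfolding mu'_1
  apply (rule pd_via)
   apply (auto intro!: derivative_eq_intros simp: rho_nz)[1]
  apply (simp add: field_simps)
  apply (simp add: eval_nat_numeral)
  done
lemma m13: "g \<in> Dset \<Longrightarrow> pd (\<lambda>g. mu'_vec c N n n1 n2 g $ 1) 3 g = c * (2*n1*g$3)"
  unfolding mu'_1
  apply (rule pd_via)
   apply (auto intro!: derivative_eq_intros simp: rho_nz)[1]
  apply (simp add: field_simps)
  done
lemma m21: "g \<in> Dset \<Longrightarrow> pd (\<lambda>g. mu'_vec c N n n1 n2 g $ 2) 1 g = c * (4*n2*g$1 - 3*n1*g$2 - 3*N*g$1*g$2/(rho g)^5)"
  unfolding mu'_2
  apply (rule pd_via)
   apply (auto intro!: derivative_eq_intros simp: rho_nz)[1]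
  apply (simp add: field_simps)
  apply (simp add: eval_nat_numeral)
  done
lemma m23: "g \<in> Dset \<Longrightarrow> pd (\<lambda>g. mu'_vec c N n n1 n2 g $ 2) 3 g = c * (2*n2*g$3)"
  unfolding mu'_2
  apply (rule pd_via)
   apply (auto intro!: derivative_eq_intros simp: rho_nz)[1]
  apply (simp add: field_simps)
  done
lemma m31: "g \<in> Dset \<Longrightarrow> pd (\<lambda>g. mu'_vec c N n n1 n2 g $ 3) 1 g = - c * g$3 * (5*n1 + 3*N*((g$3)^2+1)*g$1/(rho g)^5)"
  unfolding mu'_3
  apply (rule pd_via)
   apply (auto intro!: derivative_eq_intros simp: rho_nz)[1]
  apply (simp add: field_simps)
  apply (simp add: eval_nat_numeral)
  done
lemma m32: "g \<in> Dset \<Longrightarrow> pd (\<lambda>g. mu'_vec c N n n1 n2 g $ 3) 2 g = - c * g$3 * (5*n2 + 3*N*((g$3)^2+1)*g$2/(rho g)^5)"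
  unfolding mu'_3
  apply (rule pd_via)
   apply (auto intro!: derivative_eq_intros simp: rho_nz)[1]
  apply (simp add: field_simps)
  apply (simp add: eval_nat_numeral)
  done

lemma curl_mu': "g \<in> Dset \<Longrightarrow>
   (let m = (\<lambda>l k. pd (\<lambda>g. mu'_vec c N n n1 n2 g $ l) k g) in
    g$2 * m 3 1 - g$3 * m 2 1 + (g$3 * m 1 2 - g$1 * m 3 2) + (g$1 * m 2 3 - g$2 * m 1 3)) = 0"
  by (simp add: Let_def m12 m13 m21 m23 m31 m32) (simp add: field_simps)

lemma phi_eq: "phi_fun c N n n1 n2 = (\<lambda>g. c * (n + n1 * g$1 + n2 * g$2 + N / rho g) * (2*(g$1)^2 + 2*(g$2)^2 + (g$3)^2))"
  unfolding phi_fun_def[abs_def] by simp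

lemma phi_diff: "g \<in> Dset \<Longrightarrow> phi_fun c N n n1 n2 differentiable (at g)"
  unfolding phi_eq by (auto intro!: derivative_intros)

lemma phi1: "g \<in> Dset \<Longrightarrow> pd (phi_fun c N n n1 n2) 1 g =
   c * (n1 - N * g$1 / (rho g)^3) * (2*(g$1)^2 + 2*(g$2)^2 + (g$3)^2) + c * (n + n1 * g$1 + n2 * g$2 + N / rho g) * (4 * g$1)"
  unfolding phi_eq
  apply (rule pd_via)
   apply (auto intro!: derivative_eq_intros simp: rho_nz)[1]
  apply (simp add: field_simps)
  apply (simp add: eval_nat_numeral)
  done
lemma phi2: "g \<in> Dset \<Longrightarrow> pd (phi_fun c N n n1 n2) 2 g =
   c * (n2 - N * g$2 / (rho g)^3) * (2*(g$1)^2 + 2*(g$2)^2 + (g$3)^2) + c * (n + n1 * g$1 + n2 * g$2 + N / rho g) * (4 * g$2)"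
  unfolding phi_eq
  apply (rule pd_via)
   apply (auto intro!: derivative_eq_intros simp: rho_nz)[1]
  apply (simp add: field_simps)
  apply (simp add: eval_nat_numeral)
  done
lemma phi3: "g \<in> Dset \<Longrightarrow> pd (phi_fun c N n n1 n2) 3 g =
   c * (n + n1 * g$1 + n2 * g$2 + N / rho g) * (2 * g$3)"
  unfolding phi_eq
  apply (rule pd_via)
   apply (auto intro!: derivative_eq_intros simp: rho_nz)[1]
  apply (simp add: field_simps)
  done


lemma grad_pd: "grad_r f x $ i = pd f i x"
  unfolding grad_r_def pd_def by simp

lemma partb: "g \<in> Dset \<Longrightarrow> mu'_vec c N n n1 n2 g = psi_fun c N n n1 n2 g *\<^sub>R g + grad_r (phi_fun c N n n1 n2) g"
proof -
  assume g: "g \<in> Dset"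
  have r: "rho g \<noteq> 0" using g by simp
  have rs: "(rho g)^2 = (g$1)^2 + (g$2)^2" by (rule rho_sq)
  have "mu'_vec c N n n1 n2 g $ k = psi_fun c N n n1 n2 g * g $ k + pd (phi_fun c N n n1 n2) k g" for k
  proof -
    have "k = 1 \<or> k = 2 \<or> k = 3" using exhaust_3 by blast
    then show ?thesis
    proof (elim disjE)
      assume k: "k = 1"
      show ?thesis unfolding k phi1[OF g]
        using r rs unfolding mu'_vec_def psi_fun_def Let_def
        apply (simp add: field_simps)
        apply algebra
        done
    next
      assume k: "k = 2"
      show ?thesis unfolding k phi2[OF g]
        using r rs unfolding mu'_vec_def psi_fun_def Let_def
        apply (simp add: field_simps)
        apply algebra
        done
    next
      assume k: "k = 3"
      show ?thesis unfolding k phi3[OF g]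
        using r rs unfolding mu'_vec_def psi_fun_def Let_def
        apply (simp add: field_simps)
        apply algebra
        done
    qed
  qed
  then show ?thesis by (simp add: vec_eq_iff grad_pd)
qed

end


lemma open_Phase: "open Phase"
proof -
  have "Phase = {x::real^6. 0 < (x$4)^2 + (x$5)^2}"
    unfolding Phase_def Dset_def gv_def by simp
  also have "open \<dots>"
    by (intro open_Collect_less continuous_intros)
  finally show ?thesis .
qed

lemma gv_nth [simp]: "gv x $ 1 = x $ 4" "gv x $ 2 = x $ 5" "gv x $ 3 = x $ 6"
  unfolding gv_def by simp_all

lemma Mv_nth [simp]: "Mv x $ 1 = x $ 1" "Mv x $ 2 = x $ 2" "Mv x $ 3 = x $ 3"
  unfolding Mv_def by simp_all

lemma gv_linear: "bounded_linear gv"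
proof -
  have "linear gv"
    by (rule linearI) (simp_all add: vec_eq_iff forall_3)
  then show ?thesis using linear_conv_bounded_linear by blast
qed

lemma gv_axis:
  "gv (axis 1 1) = 0" "gv (axis 2 1) = 0" "gv (axis 3 1) = 0"
  "gv (axis 4 1) = axis 1 1" "gv (axis 5 1) = axis 2 1" "gv (axis 6 1) = axis 3 1"
  by (simp_all add: vec_eq_iff forall_3)

lemma pd_gv:
  fixes f3 :: "real^3 \<Rightarrow> real"
  assumes "f3 differentiable (at (gv x))"
  shows "pd (\<lambda>y. f3 (gv y)) j x = frechet_derivative f3 (at (gv x)) (gv (axis j 1))"
proof -
  have "((\<lambda>y. f3 (gv y)) has_derivative (\<lambda>h. frechet_derivative f3 (at (gv x)) (gv h))) (at x)"
    using has_derivative_compose[OF bounded_linear_imp_has_derivative[OF gv_linear]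
        frechet_derivative_works[THEN iffD1, OF assms]] by (simp add: o_def)
  then show ?thesis by (rule pd_has)
qed

lemma pd_gv_diff: "f3 differentiable (at (gv x)) \<Longrightarrow> (\<lambda>y. f3 (gv y)) differentiable (at x)"
  using differentiable_chain_at[OF bounded_linear_imp_differentiable[OF gv_linear]] by (simp add: o_def)

lemma pd_gv_vals:
  fixes f3 :: "real^3 \<Rightarrow> real"
  assumes "f3 differentiable (at (gv x))"
  shows "pd (\<lambda>y. f3 (gv y)) 1 x = 0" "pd (\<lambda>y. f3 (gv y)) 2 x = 0" "pd (\<lambda>y. f3 (gv y)) 3 x = 0"
    "pd (\<lambda>y. f3 (gv y)) 4 x = pd f3 1 (gv x)" "pd (\<lambda>y. f3 (gv y)) 5 x = pd f3 2 (gv x)"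
    "pd (\<lambda>y. f3 (gv y)) 6 x = pd f3 3 (gv x)"
proof -
  have lin: "linear (frechet_derivative f3 (at (gv x)))"
    using assms frechet_derivative_works has_derivative_linear by blast
  show "pd (\<lambda>y. f3 (gv y)) 1 x = 0" "pd (\<lambda>y. f3 (gv y)) 2 x = 0" "pd (\<lambda>y. f3 (gv y)) 3 x = 0"
    unfolding pd_gv[OF assms] gv_axis using linear_0[OF lin] by simp_all
  show "pd (\<lambda>y. f3 (gv y)) 4 x = pd f3 1 (gv x)" "pd (\<lambda>y. f3 (gv y)) 5 x = pd f3 2 (gv x)"
    "pd (\<lambda>y. f3 (gv y)) 6 x = pd f3 3 (gv x)"
  proof -
    have *: "pd (\<lambda>y. f3 (gv y)) j x = pd f3 k (gv x)" if "gv (axis j 1) = axis k 1" for j k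
      using pd_gv[OF assms, of j] that by (simp add: pd_def[of f3])
    show "pd (\<lambda>y. f3 (gv y)) 4 x = pd f3 1 (gv x)" "pd (\<lambda>y. f3 (gv y)) 5 x = pd f3 2 (gv x)"
      "pd (\<lambda>y. f3 (gv y)) 6 x = pd f3 3 (gv x)" by (simp_all add: * gv_axis)
  qed
qed

lemma pd_const [simp]: "pd (\<lambda>y. c) j x = 0"
  by (rule pd_has[where D="\<lambda>_. 0", simplified]) simp
lemma pd_coord [simp]: "pd (\<lambda>y. y $ k) j x = axis j 1 $ k"
  by (rule pd_has) (rule vec_nth_has_derivative)
lemma pd_add [simp]: "f differentiable (at x) \<Longrightarrow> g differentiable (at x) \<Longrightarrow> pd (\<lambda>y. f y + g y) j x = pd f j x + pd g j x"
proof -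
  assume "f differentiable (at x)" "g differentiable (at x)"
  then have "((\<lambda>y. f y + g y) has_derivative (\<lambda>h. frechet_derivative f (at x) h + frechet_derivative g (at x) h)) (at x)"
    by (intro has_derivative_add) (simp_all add: frechet_derivative_works[symmetric])
  from pd_has[OF this, of j] show ?thesis by (simp add: pd_def)
qed
lemma pd_diff [simp]: "f differentiable (at x) \<Longrightarrow> g differentiable (at x) \<Longrightarrow> pd (\<lambda>y. f y - g y) j x = pd f j x - pd g j x"
proof -
  assume "f differentiable (at x)" "g differentiable (at x)"
  then have "((\<lambda>y. f y - g y) has_derivative (\<lambda>h. frechet_derivative f (at x) h - frechet_derivative g (at x) h)) (at x)"
    by (intro has_derivative_diff) (simp_all add: frechet_derivative_works[symmetric])
  from pd_has[OF this, of j] show ?thesis by (simp add: pd_def)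
qed
lemma pd_uminus [simp]: "f differentiable (at x) \<Longrightarrow> pd (\<lambda>y. - f y) j x = - pd f j x"
proof -
  assume "f differentiable (at x)"
  then have "((\<lambda>y. - f y) has_derivative (\<lambda>h. - frechet_derivative f (at x) h)) (at x)"
    by (intro has_derivative_minus) (simp_all add: frechet_derivative_works[symmetric])
  from pd_has[OF this, of j] show ?thesis by (simp add: pd_def)
qed


lemmas diff_simps = differentiable_add differentiable_diff differentiable_minus differentiable_const vec_nth_differentiable

lemma Pi_entry_diff:
  assumes dmu: "\<And>l. (\<lambda>y. mu y $ l) differentiable (at x)"
  shows "(\<lambda>y. Pi_mat mu y $ a $ b) differentiable (at x)"
  using exhaust_6[of a] exhaust_6[of b] dmu
  by (elim disjE) (simp_all add: Pi_mat_def Let_def diff_simps)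

lemma pd_Pi:
  assumes dmu: "\<And>l. (\<lambda>y. mu y $ l) differentiable (at x)"
  shows "pd (\<lambda>y. Pi_mat mu y $ a $ b) j x = Pi_mat (\<lambda>_. \<chi> l. pd (\<lambda>y. mu y $ l) j x) (axis j 1) $ a $ b"
  using exhaust_6[of a] exhaust_6[of b] dmu
  by (elim disjE) (simp_all add: Pi_mat_def Let_def diff_simps del: axis6)


lemma Phase_gv: "x \<in> Phase \<Longrightarrow> gv x \<in> Dset"
  unfolding Phase_def by simp

theorem poisson_mu':
  "is_poisson_on (Pi_mat (\<lambda>x. mu'_vec c N n n1 n2 (gv x))) Phase"
  unfolding is_poisson_on_def
proof (intro allI impI ballI)
  fix f g h x
  assume sm: "smooth_on Phase f \<and> smooth_on Phase g \<and> smooth_on Phase h" and x: "x \<in> Phase"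
  define mu where "mu = (\<lambda>y. mu'_vec c N n n1 n2 (gv y))"
  have gx: "gv x \<in> Dset" using x by (rule Phase_gv)
  have dmu3: "\<And>l. (\<lambda>g. mu'_vec c N n n1 n2 g $ l) differentiable (at (gv x))"
    using mu'_diff[OF gx] .
  have dmu: "\<And>l. (\<lambda>y. mu y $ l) differentiable (at x)"
    unfolding mu_def by (rule pd_gv_diff[OF dmu3])
  define m where "m l k = pd (\<lambda>g. mu'_vec c N n n1 n2 g $ l) k (gv x)" for l k
  have vj: "(\<chi> l. pd (\<lambda>y. mu y $ l) j x) =
     (if j = 4 then vector [m 1 1, m 2 1, m 3 1] else if j = 5 then vector [m 1 2, m 2 2, m 3 2]
      else if j = 6 then vector [m 1 3, m 2 3, m 3 3] else (0::real^3))" for j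
    using exhaust_6[of j]
    by (elim disjE) (simp_all add: vec_eq_iff forall_3 mu_def m_def pd_gv_vals[OF dmu3])
  have curl: "x $ 5 * m 3 1 - x $ 6 * m 2 1 + (x $ 6 * m 1 2 - x $ 4 * m 3 2) + (x $ 4 * m 2 3 - x $ 5 * m 1 3) = 0"
    using curl_mu'[OF gx, of c N n n1 n2] unfolding m_def Let_def by simp
  show "pbracket (Pi_mat mu) f (pbracket (Pi_mat mu) g h) x + pbracket (Pi_mat mu) g (pbracket (Pi_mat mu) h f) x
             + pbracket (Pi_mat mu) h (pbracket (Pi_mat mu) f g) x = 0"
  proof (rule jacobi_general[OF open_Phase x])
    show "smooth_on Phase f" "smooth_on Phase g" "smooth_on Phase h" using sm by auto
    show "\<And>a b. (\<lambda>y. Pi_mat mu y $ a $ b) differentiable (at x)"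
      by (rule Pi_entry_diff[OF dmu])
    show "\<And>a b. Pi_mat mu x $ a $ b = - Pi_mat mu x $ b $ a"
      subgoal for a b
        using exhaust_6[of a] exhaust_6[of b]
        by (elim disjE) (simp_all add: Pi_mat_def Let_def)
      done
    show "\<And>i a b. (\<Sum>j\<in>UNIV. Pi_mat mu x $ i $ j * pd (\<lambda>y. Pi_mat mu y $ a $ b) j x
              + Pi_mat mu x $ a $ j * pd (\<lambda>y. Pi_mat mu y $ b $ i) j x
              + Pi_mat mu x $ b $ j * pd (\<lambda>y. Pi_mat mu y $ i $ a) j x) = 0"
      unfolding pd_Pi[OF dmu] vj
      by (rule J_Pi[OF curl])
  qed
qed



lemma fd_cong:
  assumes "open S" "x \<in> S" "\<And>y. y \<in> S \<Longrightarrow> f y = g y"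
  shows "frechet_derivative f (at x) = frechet_derivative g (at x)"
proof -
  have "(\<lambda>f'. (f has_derivative f') (at x)) = (\<lambda>f'. (g has_derivative f') (at x))"
  proof (rule ext, rule iffI)
    fix f' assume "(f has_derivative f') (at x)"
    then show "(g has_derivative f') (at x)"
      by (rule has_derivative_transform_within_open[OF _ assms(1,2)]) (use assms(3) in auto)
  next
    fix f' assume "(g has_derivative f') (at x)"
    then show "(f has_derivative f') (at x)"
      by (rule has_derivative_transform_within_open[OF _ assms(1,2)]) (use assms(3) in auto)
  qed
  then show ?thesis unfolding frechet_derivative_def by simp
qed

lemma diff_cong:
  assumes "open S" "x \<in> S" "\<And>y. y \<in> S \<Longrightarrow> f y = g y"
  shows "f differentiable (at x) \<longleftrightarrow> g differentiable (at x)"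
  unfolding differentiable_def
  using has_derivative_transform_within_open[OF _ assms(1,2)] assms(3) by metis

lemma Ck_cong:
  assumes "open S" "\<And>y. y \<in> S \<Longrightarrow> f y = g y"
  shows "Ck_on k S f = Ck_on k S g"
  using assms(2)
proof (induction k arbitrary: f g)
  case 0
  then show ?case by (simp cong: continuous_on_cong)
next
  case (Suc k)
  have d: "(f differentiable_on S) \<longleftrightarrow> (g differentiable_on S)"
    using diff_cong[OF assms(1) _ Suc.prems] assms(1) by (simp add: differentiable_on_eq_differentiable_at)
  have p: "Ck_on k S (\<lambda>x. frechet_derivative f (at x) (axis i 1)) = Ck_on k S (\<lambda>x. frechet_derivative g (at x) (axis i 1))" for i
    by (rule Suc.IH) (simp add: fd_cong[OF assms(1) _ Suc.prems])
  show ?case using d p by simp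
qed

lemma pd_mult:
  assumes "f differentiable (at x)" "g differentiable (at x)"
  shows "pd (\<lambda>y. f y * g y) j x = f x * pd g j x + pd f j x * g x"
proof -
  have "((\<lambda>y. f y * g y) has_derivative (\<lambda>h. f x * frechet_derivative g (at x) h + frechet_derivative f (at x) h * g x)) (at x)"
    using assms by (intro has_derivative_mult) (simp_all add: frechet_derivative_works[symmetric])
  from pd_has[OF this, of j] show ?thesis by (simp add: pd_def)
qed

lemma rr_diff: "g \<in> Dset \<Longrightarrow> (\<lambda>g. 1 / rho g) differentiable (at g)"
  by (auto intro!: derivative_intros)

lemma rr_pd: "g \<in> Dset \<Longrightarrow> pd (\<lambda>g. 1 / rho g) 1 g = - (g$1) / (rho g)^3"
  "g \<in> Dset \<Longrightarrow> pd (\<lambda>g. 1 / rho g) 2 g = - (g$2) / (rho g)^3"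
  "g \<in> Dset \<Longrightarrow> pd (\<lambda>g. 1 / rho g) 3 g = 0"
  by (rule pd_via, (auto intro!: derivative_eq_intros)[1], simp add: field_simps eval_nat_numeral)+

inductive cls :: "(real^6 \<Rightarrow> real) \<Rightarrow> bool" where
  cconst: "cls (\<lambda>x. a)"
| ccoord: "cls (\<lambda>x. x $ i)"
| crr: "cls (\<lambda>x. 1 / rho (gv x))"
| cadd: "cls f \<Longrightarrow> cls g \<Longrightarrow> cls (\<lambda>x. f x + g x)"
| cmul: "cls f \<Longrightarrow> cls g \<Longrightarrow> cls (\<lambda>x. f x * g x)"

lemma cls_props:
  "cls f \<Longrightarrow> (\<forall>x\<in>Phase. f differentiable (at x)) \<and> (\<forall>j. \<exists>f'. cls f' \<and> (\<forall>x\<in>Phase. pd f j x = f' x))"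
proof (induction rule: cls.induct)
  case (cconst a)
  then show ?case by (auto intro: cls.cconst)
next
  case (ccoord i)
  then show ?case by (auto intro!: cls.cconst vec_nth_differentiable)
next
  case crr
  have d: "(\<lambda>x. 1 / rho (gv x)) differentiable (at x)" if "x \<in> Phase" for x
    using pd_gv_diff[OF rr_diff[OF Phase_gv[OF that]]] .
  have "\<exists>f'. cls f' \<and> (\<forall>x\<in>Phase. pd (\<lambda>x. 1 / rho (gv x)) j x = f' x)" for j
  proof -
    define r where "r = (\<lambda>x::real^6. 1 / rho (gv x))"
    have cr: "cls r" unfolding r_def by (rule cls.crr)
    have c3: "cls (\<lambda>x. r x * (r x * r x))" using cr by (intro cls.cmul)
    have e: "- (x $ k / (rho (gv x))^3) = (-1) * (x $ k * (r x * (r x * r x)))" if "x \<in> Phase" for x k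
      unfolding r_def by (simp add: field_simps eval_nat_numeral)
    have c4: "cls (\<lambda>x. (-1) * (x $ k * (r x * (r x * r x))))" for k
      using cr by (intro cls.intros)
    have "j = 1 \<or> j = 2 \<or> j = 3 \<or> j = 4 \<or> j = 5 \<or> j = 6" by (rule exhaust_6)
    then show ?thesis
    proof (elim disjE)
      assume j: "j = 4"
      show ?thesis
      proof (intro exI conjI ballI)
        show "cls (\<lambda>x. (-1) * (x $ 4 * (r x * (r x * r x))))" by (rule c4)
        fix x assume x: "x \<in> Phase"
        show "pd (\<lambda>x. 1 / rho (gv x)) j x = (-1) * (x $ 4 * (r x * (r x * r x)))"
          unfolding j pd_gv_vals(4)[OF rr_diff[OF Phase_gv[OF x]]] rr_pd(1)[OF Phase_gv[OF x]]
          using e[OF x, of 4] by simp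
      qed
    next
      assume j: "j = 5"
      show ?thesis
      proof (intro exI conjI ballI)
        show "cls (\<lambda>x. (-1) * (x $ 5 * (r x * (r x * r x))))" by (rule c4)
        fix x assume x: "x \<in> Phase"
        show "pd (\<lambda>x. 1 / rho (gv x)) j x = (-1) * (x $ 5 * (r x * (r x * r x)))"
          unfolding j pd_gv_vals(5)[OF rr_diff[OF Phase_gv[OF x]]] rr_pd(2)[OF Phase_gv[OF x]]
          using e[OF x, of 5] by simp
      qed
    qed (auto intro!: exI[of _ "\<lambda>x. 0"] cls.cconst simp: pd_gv_vals[OF rr_diff[OF Phase_gv]] rr_pd(3)[OF Phase_gv])
  qed
  then show ?case using d by blast
next
  case (cadd f g)
  have d: "\<forall>x\<in>Phase. (\<lambda>x. f x + g x) differentiable (at x)"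
    using cadd.IH by (auto intro!: differentiable_add)
  have "\<exists>h. cls h \<and> (\<forall>x\<in>Phase. pd (\<lambda>x. f x + g x) j x = h x)" for j
  proof -
    obtain f' where f': "cls f'" "\<forall>x\<in>Phase. pd f j x = f' x" using cadd.IH by blast
    obtain g' where g': "cls g'" "\<forall>x\<in>Phase. pd g j x = g' x" using cadd.IH by blast
    show ?thesis
      using f' g' cadd.IH by (intro exI[of _ "\<lambda>x. f' x + g' x"]) (auto intro: cls.cadd)
  qed
  then show ?case using d by blast
next
  case (cmul f g)
  have d: "\<forall>x\<in>Phase. (\<lambda>x. f x * g x) differentiable (at x)"
    using cmul.IH by (auto intro!: differentiable_mult)
  have "\<exists>h. cls h \<and> (\<forall>x\<in>Phase. pd (\<lambda>x. f x * g x) j x = h x)" for j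
  proof -
    obtain f' where f': "cls f'" "\<forall>x\<in>Phase. pd f j x = f' x" using cmul.IH by blast
    obtain g' where g': "cls g'" "\<forall>x\<in>Phase. pd g j x = g' x" using cmul.IH by blast
    show ?thesis
      using f' g' cmul.IH cmul.hyps
      by (intro exI[of _ "\<lambda>x. f x * g' x + f' x * g x"]) (auto intro: cls.cadd cls.cmul simp: pd_mult)
  qed
  then show ?case using d by blast
qed

lemma cls_Ck: "cls f \<Longrightarrow> Ck_on k Phase f"
proof (induction k arbitrary: f)
  case 0
  then show ?case using cls_props[OF 0]
    by (simp add: continuous_at_imp_continuous_on differentiable_imp_continuous_within)
next
  case (Suc k)
  have d: "f differentiable_on Phase"
    using cls_props[OF Suc.prems] open_Phase by (simp add: differentiable_on_eq_differentiable_at)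
  have "Ck_on k Phase (\<lambda>x. frechet_derivative f (at x) (axis i 1))" for i
  proof -
    obtain f' where f': "cls f'" "\<forall>x\<in>Phase. pd f i x = f' x" using cls_props[OF Suc.prems] by blast
    have "Ck_on k Phase (\<lambda>x. frechet_derivative f (at x) (axis i 1)) = Ck_on k Phase f'"
      by (rule Ck_cong[OF open_Phase]) (use f'(2) in \<open>simp add: pd_def\<close>)
    then show ?thesis using Suc.IH[OF f'(1)] by simp
  qed
  then show ?case using d by simp
qed

lemma cls_smooth: "cls f \<Longrightarrow> smooth_on Phase f"
  unfolding smooth_on_def using cls_Ck by blast



lemma I2_eq: "I2_fun c N n n1 n2 = (\<lambda>x::real^6. ((x$1 * x$4 + x$2 * x$5) + x$3 * x$6) + phi_fun c N n n1 n2 (gv x))"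
  unfolding I2_fun_def[abs_def] phi_fun_def inner_vec_def sum_3 by simp

lemma I2_cls: "cls (I2_fun c N n n1 n2)"
proof -
  have eq: "I2_fun c N n n1 n2 = (\<lambda>x::real^6. ((x$1 * x$4 + x$2 * x$5) + x$3 * x$6) +
     c * ((n + n1 * x$4 + n2 * x$5) + N * (1 / rho (gv x))) * ((2 * (x$4 * x$4) + 2 * (x$5 * x$5)) + x$6 * x$6))"
    unfolding I2_eq phi_fun_def by (simp add: power2_eq_square)
  have "cls (\<lambda>x::real^6. ((x$1 * x$4 + x$2 * x$5) + x$3 * x$6) +
     c * ((n + n1 * x$4 + n2 * x$5) + N * (1 / rho (gv x))) * ((2 * (x$4 * x$4) + 2 * (x$5 * x$5)) + x$6 * x$6))"
    by (intro cls.intros)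
  then show ?thesis by (simp only: eq)
qed

lemma I2_smooth: "smooth_on Phase (I2_fun c N n n1 n2)"
  by (rule cls_smooth[OF I2_cls])

lemma I2_grad:
  assumes x: "x \<in> Phase"
  shows "grad_r (I2_fun c N n n1 n2) x = vector [x$4, x$5, x$6,
      x$1 + pd (phi_fun c N n n1 n2) 1 (gv x), x$2 + pd (phi_fun c N n n1 n2) 2 (gv x),
      x$3 + pd (phi_fun c N n n1 n2) 3 (gv x)]"
proof -
  have pdiff: "phi_fun c N n n1 n2 differentiable (at (gv x))"
    by (rule phi_diff[OF Phase_gv[OF x]])
  have d2: "(\<lambda>y. phi_fun c N n n1 n2 (gv y)) differentiable (at x)"
    by (rule pd_gv_diff[OF pdiff])
  have dm: "(\<lambda>y::real^6. y$i * y$k) differentiable (at x)" for i k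
    by (intro differentiable_mult vec_nth_differentiable)
  have d1: "(\<lambda>y::real^6. (y$1 * y$4 + y$2 * y$5) + y$3 * y$6) differentiable (at x)"
    by (intro differentiable_add dm)
  have pq: "pd (\<lambda>y::real^6. (y$1 * y$4 + y$2 * y$5) + y$3 * y$6) j x = axis j 1 $ 1 * x$4 + x$1 * axis j 1 $ 4
      + (axis j 1 $ 2 * x$5 + x$2 * axis j 1 $ 5) + (axis j 1 $ 3 * x$6 + x$3 * axis j 1 $ 6)" for j
    by (simp only: pd_add[OF differentiable_add[OF dm dm] dm] pd_add[OF dm dm] pd_mult[OF vec_nth_differentiable vec_nth_differentiable] pd_coord)
  have "pd (I2_fun c N n n1 n2) j x = pd (\<lambda>y::real^6. (y$1 * y$4 + y$2 * y$5) + y$3 * y$6) j x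
       + pd (\<lambda>y. phi_fun c N n n1 n2 (gv y)) j x" for j
    unfolding I2_eq by (rule pd_add[OF d1 d2])
  then have "pd (I2_fun c N n n1 n2) j x = axis j 1 $ 1 * x$4 + x$1 * axis j 1 $ 4
      + (axis j 1 $ 2 * x$5 + x$2 * axis j 1 $ 5) + (axis j 1 $ 3 * x$6 + x$3 * axis j 1 $ 6)
      + pd (\<lambda>y. phi_fun c N n n1 n2 (gv y)) j x" for j
    unfolding pq by simp
  then show ?thesis
    by (simp add: vec_eq_iff forall_6 grad_pd pd_gv_vals[OF pdiff])
qed

lemma I2_casimir_eq:
  assumes x: "x \<in> Phase"
  shows "Pi_mat (\<lambda>x. mu'_vec c N n n1 n2 (gv x)) x *v grad_r (I2_fun c N n n1 n2) x = 0"
proof -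
  define ps where "ps = psi_fun c N n n1 n2 (gv x)"
  define p1 where "p1 = pd (phi_fun c N n n1 n2) 1 (gv x)"
  define p2 where "p2 = pd (phi_fun c N n n1 n2) 2 (gv x)"
  define p3 where "p3 = pd (phi_fun c N n n1 n2) 3 (gv x)"
  have mb: "mu'_vec c N n n1 n2 (gv x) $ k = ps * gv x $ k + pd (phi_fun c N n n1 n2) k (gv x)" for k
  proof -
    have "mu'_vec c N n n1 n2 (gv x) $ k = (psi_fun c N n n1 n2 (gv x) *\<^sub>R gv x + grad_r (phi_fun c N n n1 n2) (gv x)) $ k"
      using partb[OF Phase_gv[OF x], of c N n n1 n2] by simp
    then show ?thesis unfolding ps_def by (simp add: grad_pd)
  qed
  have m1: "mu'_vec c N n n1 n2 (gv x) $ 1 = ps * x$4 + p1" using mb[of 1] unfolding p1_def by simp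
  have m2: "mu'_vec c N n n1 n2 (gv x) $ 2 = ps * x$5 + p2" using mb[of 2] unfolding p2_def by simp
  have m3: "mu'_vec c N n n1 n2 (gv x) $ 3 = ps * x$6 + p3" using mb[of 3] unfolding p3_def by simp
  show ?thesis
    unfolding I2_grad[OF x] p1_def[symmetric] p2_def[symmetric] p3_def[symmetric]
    by (simp add: vec_eq_iff forall_6 matrix_vector_mult_def sum_6 Pi_mat_def Let_def m1 m2 m3 algebra_simps)
qed

theorem I2_casimir: "casimir_on (Pi_mat (\<lambda>x. mu'_vec c N n n1 n2 (gv x))) Phase (I2_fun c N n n1 n2)"
  unfolding casimir_on_def using I2_smooth I2_casimir_eq by blast



lemma picard_global:
  fixes f :: "'a::euclidean_space \<Rightarrow> 'a" and x0 :: 'a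
  assumes cont: "continuous_on UNIV f"
    and lip: "\<And>y z. norm (f y - f z) \<le> L * norm (y - z)"
    and bnd: "\<And>y. norm (f y) \<le> B" and h: "0 < h" and hL: "h * L < 1" and L: "0 \<le> L"
  shows "\<exists>y. (\<forall>t\<in>{0<..<h}. (y has_vector_derivative f (y t)) (at t)) \<and> (\<forall>t. norm (y t - x0) \<le> h * B)"
proof -
  have B: "0 \<le> B" using bnd[of x0] norm_ge_zero[of "f x0"] by linarith
  define cl where "cl t = max 0 (min h t)" for t :: real
  have cl: "cl t \<in> {0..h}" for t using h unfolding cl_def by auto
  have clc: "continuous_on UNIV cl" unfolding cl_def by (intro continuous_intros)
  have cli: "cl t = t" if "t \<in> {0..h}" for t using that unfolding cl_def by auto
  have contg: "continuous_on S (\<lambda>s. f (apply_bcontfun \<phi> s))" for \<phi> :: "real \<Rightarrow>\<^sub>C 'a" and S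
    by (rule continuous_on_compose2[OF cont continuous_on_apply_bcontfun]) auto
  define Tf where "Tf \<phi> = (\<lambda>t. x0 + integral {0..cl t} (\<lambda>s. f (apply_bcontfun \<phi> s)))" for \<phi> :: "real \<Rightarrow>\<^sub>C 'a"
  have ibound: "norm (integral {0..cl t} (\<lambda>s. f (apply_bcontfun \<phi> s))) \<le> h * B" for \<phi> t
  proof -
    have "norm (integral {0..cl t} (\<lambda>s. f (apply_bcontfun \<phi> s))) \<le> B * (cl t - 0)"
      by (rule integral_bound) (use cl contg bnd in auto)
    also have "\<dots> \<le> B * h" using cl[of t] B by (auto intro: mult_left_mono)
    finally show ?thesis by (simp add: mult.commute)
  qed
  have Tfb: "Tf \<phi> \<in> bcontfun" for \<phi>
  proof (rule bcontfun_normI)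
    have c1: "continuous_on {0..h} (\<lambda>u. integral {0..u} (\<lambda>s. f (apply_bcontfun \<phi> s)))"
      by (rule indefinite_integral_continuous_1, rule integrable_continuous_interval, rule contg)
    have "continuous_on UNIV (\<lambda>t. integral {0..cl t} (\<lambda>s. f (apply_bcontfun \<phi> s)))"
      by (rule continuous_on_compose2[OF c1 clc]) (use cl in auto)
    then show "continuous_on UNIV (Tf \<phi>)" unfolding Tf_def by (intro continuous_intros)
    show "norm (Tf \<phi> t) \<le> norm x0 + h * B" for t
      unfolding Tf_def using ibound[of t \<phi>] norm_triangle_ineq[of x0] by (meson add_left_mono order_trans)
  qed
  define T where "T \<phi> = Bcontfun (Tf \<phi>)" for \<phi>
  have Tapp: "apply_bcontfun (T \<phi>) = Tf \<phi>" for \<phi> unfolding T_def using Tfb Bcontfun_inverse by blast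
  have contr: "dist (T \<phi>) (T \<psi>) \<le> (h * L) * dist \<phi> \<psi>" for \<phi> \<psi>
  proof (rule dist_bound)
    fix t
    have i1: "(\<lambda>s. f (apply_bcontfun \<phi> s)) integrable_on {0..cl t}"
      by (rule integrable_continuous_interval, rule contg)
    have i2: "(\<lambda>s. f (apply_bcontfun \<psi> s)) integrable_on {0..cl t}"
      by (rule integrable_continuous_interval, rule contg)
    have "dist (T \<phi> t) (T \<psi> t) = norm (integral {0..cl t} (\<lambda>s. f (apply_bcontfun \<phi> s) - f (apply_bcontfun \<psi> s)))"
      unfolding Tapp Tf_def dist_norm integral_diff[OF i1 i2] by simp
    also have "\<dots> \<le> (L * dist \<phi> \<psi>) * (cl t - 0)"
    proof (rule integral_bound)
      show "0 \<le> cl t" using cl by auto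
      show "continuous_on {0..cl t} (\<lambda>s. f (apply_bcontfun \<phi> s) - f (apply_bcontfun \<psi> s))"
        by (intro continuous_intros contg)
      fix s
      have "norm (f (apply_bcontfun \<phi> s) - f (apply_bcontfun \<psi> s)) \<le> L * norm (apply_bcontfun \<phi> s - apply_bcontfun \<psi> s)"
        by (rule lip)
      also have "\<dots> \<le> L * dist \<phi> \<psi>"
        using dist_bounded[of \<phi> s \<psi>] L by (simp add: dist_norm mult_left_mono)
      finally show "norm (f (apply_bcontfun \<phi> s) - f (apply_bcontfun \<psi> s)) \<le> L * dist \<phi> \<psi>" .
    qed
    also have "\<dots> \<le> (L * dist \<phi> \<psi>) * h"
      using cl[of t] L by (auto intro!: mult_left_mono)
    finally show "dist (T \<phi> t) (T \<psi> t) \<le> (h * L) * dist \<phi> \<psi>" by (simp add: ac_simps)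
  qed
  obtain \<phi> where fixp: "T \<phi> = \<phi>"
    using banach_fix_type[of "h * L" T] contr h L hL by (auto simp: zero_le_mult_iff)
  have phi: "apply_bcontfun \<phi> = Tf \<phi>" using Tapp[of \<phi>] fixp by simp
  define g where "g s = f (apply_bcontfun \<phi> s)" for s
  show ?thesis
  proof (intro exI conjI ballI allI)
    fix t :: real assume t: "t \<in> {0<..<h}"
    have "((\<lambda>u. x0 + integral {0..u} g) has_vector_derivative (0 + g t)) (at t within {0..h})"
      by (intro derivative_intros integral_has_vector_derivative) (use t contg in \<open>auto simp: g_def\<close>)
    then have d: "((\<lambda>u. x0 + integral {0..u} g) has_vector_derivative g t) (at t)"
      using at_within_interior[of t "{0..h}"] t by simp
    have "((apply_bcontfun \<phi>) has_vector_derivative g t) (at t)"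
    proof (rule has_vector_derivative_transform_within_open[OF d, of "{0<..<h}"])
      show "open {0<..<h}" by simp
      show "t \<in> {0<..<h}" by (rule t)
      fix u assume "u \<in> {0<..<h}"
      then show "x0 + integral {0..u} g = apply_bcontfun \<phi> u"
        by (subst phi) (simp add: Tf_def cli g_def[abs_def])
    qed
    then show "(apply_bcontfun \<phi> has_vector_derivative f (apply_bcontfun \<phi> t)) (at t)"
      unfolding g_def .
  next
    fix t
    show "norm (apply_bcontfun \<phi> t - x0) \<le> h * B"
      using ibound[of t \<phi>] by (subst phi) (simp add: Tf_def)
  qed
qed



definition clsP :: "(real^6 \<Rightarrow> real) \<Rightarrow> bool" where
  "clsP f = (\<exists>g. cls g \<and> (\<forall>x\<in>Phase. f x = g x))"

lemma clsP_cong: "clsP f \<Longrightarrow> (\<And>x. x \<in> Phase \<Longrightarrow> f x = g x) \<Longrightarrow> clsP g"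
  unfolding clsP_def by metis

lemma clsP_const [intro]: "clsP (\<lambda>x. a)"
  unfolding clsP_def by (auto intro: cls.cconst)
lemma clsP_coord [intro]: "clsP (\<lambda>x. x $ i)"
  unfolding clsP_def by (auto intro: cls.ccoord)
lemma clsP_add [intro]: "clsP f \<Longrightarrow> clsP g \<Longrightarrow> clsP (\<lambda>x. f x + g x)"
  unfolding clsP_def by (metis cls.cadd)
lemma clsP_mul [intro]: "clsP f \<Longrightarrow> clsP g \<Longrightarrow> clsP (\<lambda>x. f x * g x)"
  unfolding clsP_def by (metis cls.cmul)
lemma clsP_uminus [intro]: "clsP f \<Longrightarrow> clsP (\<lambda>x. - f x)"
proof -
  assume "clsP f"
  then have "clsP (\<lambda>x. (-1) * f x)" by (intro clsP_mul clsP_const)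
  then show ?thesis by (rule clsP_cong) simp
qed
lemma clsP_diff [intro]: "clsP f \<Longrightarrow> clsP g \<Longrightarrow> clsP (\<lambda>x. f x - g x)"
proof -
  assume "clsP f" "clsP g"
  then have "clsP (\<lambda>x. f x + - g x)" by (intro clsP_add clsP_uminus)
  then show ?thesis by (rule clsP_cong) simp
qed
lemma clsP_divc [intro]: "clsP f \<Longrightarrow> clsP (\<lambda>x. f x / a)"
proof -
  assume "clsP f"
  then have "clsP (\<lambda>x. f x * (1 / a))" by (intro clsP_mul clsP_const)
  then show ?thesis by (rule clsP_cong) simp
qed
lemma clsP_pow [intro]: "clsP f \<Longrightarrow> clsP (\<lambda>x. f x ^ k)"
proof (induction k)
  case 0 then show ?case by (simp add: clsP_const)
next
  case (Suc k)
  then have "clsP (\<lambda>x. f x * f x ^ k)" by (intro clsP_mul)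
  then show ?case by (rule clsP_cong) simp
qed
lemma clsP_rr [intro]: "clsP (\<lambda>x. 1 / rho (gv x))"
  unfolding clsP_def by (auto intro: cls.crr)
lemma clsP_divrho [intro]: "clsP f \<Longrightarrow> clsP (\<lambda>x. f x / rho (gv x))"
proof -
  assume "clsP f"
  then have "clsP (\<lambda>x. f x * (1 / rho (gv x)))" by (intro clsP_mul clsP_rr)
  then show ?thesis by (rule clsP_cong) simp
qed
lemma clsP_divrho_pow [intro]: "clsP f \<Longrightarrow> clsP (\<lambda>x. f x / rho (gv x) ^ k)"
proof -
  assume "clsP f"
  then have "clsP (\<lambda>x. f x * (1 / rho (gv x)) ^ k)" by (intro clsP_mul clsP_pow clsP_rr)
  then show ?thesis by (rule clsP_cong) (simp add: power_one_over)
qed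

lemma clsP_diffble: "clsP f \<Longrightarrow> x \<in> Phase \<Longrightarrow> f differentiable (at x)"
  unfolding clsP_def using cls_props diff_cong[OF open_Phase] by metis

lemma clsP_pd: "clsP f \<Longrightarrow> clsP (pd f j)"
proof -
  assume "clsP f"
  then obtain g where g: "cls g" "\<forall>x\<in>Phase. f x = g x" unfolding clsP_def by blast
  obtain g' where g': "cls g'" "\<forall>x\<in>Phase. pd g j x = g' x" using cls_props[OF g(1)] by blast
  have "pd f j x = g' x" if "x \<in> Phase" for x
    using fd_cong[OF open_Phase that, of f g] g(2) g'(2) that unfolding pd_def by simp
  then show ?thesis unfolding clsP_def using g'(1) by blast
qed

lemma clsP_cont: "clsP f \<Longrightarrow> continuous_on Phase f"
  using clsP_diffble by (meson continuous_at_imp_continuous_on differentiable_imp_continuous_within)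

lemma axis_expand6: "v = (\<Sum>j\<in>UNIV. (v $ j) *\<^sub>R (axis j 1 :: real^6))"
  using exhaust_6 by (auto simp add: vec_eq_iff sum_6 axis_def)

lemma lin_expand6:
  assumes "linear (D :: real^6 \<Rightarrow> real)"
  shows "D v = (\<Sum>j\<in>UNIV. v $ j * D (axis j 1))"
proof -
  have "D v = D (\<Sum>j\<in>UNIV. (v $ j) *\<^sub>R (axis j 1 :: real^6))" using axis_expand6[of v] by simp
  also have "\<dots> = (\<Sum>j\<in>UNIV. v $ j * D (axis j 1))"
    by (simp add: linear_sum[OF assms] linear_scale[OF assms])
  finally show ?thesis .
qed

lemma fd_expand:
  fixes f :: "real^6 \<Rightarrow> real"
  assumes "f differentiable (at x)"
  shows "frechet_derivative f (at x) v = (\<Sum>j\<in>UNIV. v $ j * pd f j x)"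
  unfolding pd_def by (rule lin_expand6[OF linear_frechet_derivative[OF assms]])

lemma clsP_bounded_on:
  assumes "clsP f" "compact K" "K \<subseteq> Phase"
  shows "\<exists>B. \<forall>x\<in>K. \<bar>f x\<bar> \<le> B"
proof -
  have "continuous_on K f" using clsP_cont[OF assms(1)] assms(3) continuous_on_subset by blast
  then have "compact (f ` K)" using assms(2) compact_continuous_image by blast
  then obtain B where "\<forall>y\<in>f ` K. norm y \<le> B" using compact_imp_bounded bounded_iff by metis
  then show ?thesis by auto
qed

lemma clsP_lip:
  assumes f: "clsP f" and K: "compact K" "convex K" "K \<subseteq> Phase"
  shows "\<exists>L\<ge>0. \<forall>y\<in>K. \<forall>z\<in>K. \<bar>f y - f z\<bar> \<le> L * norm (y - z)"
proof -
  have "\<forall>j. \<exists>B. \<forall>x\<in>K. \<bar>pd f j x\<bar> \<le> B"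
    using clsP_bounded_on[OF clsP_pd[OF f] K(1,3)] by blast
  then obtain B where B: "\<And>j x. x \<in> K \<Longrightarrow> \<bar>pd f j x\<bar> \<le> B j" by metis
  define L where "L = (\<Sum>j\<in>UNIV. \<bar>B j\<bar>)"
  have L0: "L \<ge> 0" unfolding L_def by (simp add: sum_nonneg)
  have dif: "f differentiable (at x)" if "x \<in> K" for x using clsP_diffble[OF f] K(3) that by blast
  have on: "onorm (frechet_derivative f (at x)) \<le> L" if x: "x \<in> K" for x
  proof (rule onorm_le)
    fix v :: "real^6"
    have "norm (frechet_derivative f (at x) v) = \<bar>\<Sum>j\<in>UNIV. v $ j * pd f j x\<bar>"
      using fd_expand[OF dif[OF x]] by simp
    also have "\<dots> \<le> (\<Sum>j\<in>UNIV. \<bar>v $ j * pd f j x\<bar>)" by (rule sum_abs)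
    also have "\<dots> \<le> (\<Sum>j\<in>UNIV. norm v * \<bar>B j\<bar>)"
    proof (rule sum_mono)
      fix j
      have "\<bar>v $ j\<bar> \<le> norm v" by (rule component_le_norm_cart)
      moreover have "\<bar>pd f j x\<bar> \<le> \<bar>B j\<bar>" using B[OF x, of j] by linarith
      ultimately show "\<bar>v $ j * pd f j x\<bar> \<le> norm v * \<bar>B j\<bar>"
        by (simp add: abs_mult mult_mono')
    qed
    also have "\<dots> = L * norm v" unfolding L_def by (simp add: sum_distrib_left mult.commute)
    finally show "norm (frechet_derivative f (at x) v) \<le> L * norm v" .
  qed
  have "\<bar>f y - f z\<bar> \<le> L * norm (y - z)" if "y \<in> K" "z \<in> K" for y z
  proof -
    have "norm (f y - f z) \<le> L * norm (y - z)"
    proof (rule differentiable_bound[OF K(2) _ on that])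
      fix x assume "x \<in> K"
      then show "(f has_derivative frechet_derivative f (at x)) (at x within K)"
        using dif frechet_derivative_works has_derivative_at_withinI by blast
    qed
    then show ?thesis by simp
  qed
  then show ?thesis using L0 by blast
qed

context
  fixes c N n n1 n2 a1 a2 \<epsilon> :: real
begin

lemma clsP_mu: "clsP (\<lambda>x. mu_vec c N n n1 n2 (gv x) $ l)"
proof -
  have "l = 1 \<or> l = 2 \<or> l = 3" by (rule exhaust_3)
  then show ?thesis
    by (elim disjE) (simp_all add: mu_vec_def Let_def, (intro clsP_add clsP_diff clsP_mul clsP_const clsP_coord clsP_pow clsP_divrho clsP_divrho_pow clsP_uminus)+)
qed


lemma U_diff: "g \<in> Dset \<Longrightarrow> U_pot c N n n1 n2 a1 a2 \<epsilon> differentiable (at g)"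
  unfolding U_pot_def[abs_def] by (auto intro!: derivative_intros)

lemma clsP_U: "clsP (\<lambda>x. U_pot c N n n1 n2 a1 a2 \<epsilon> (gv x))"
  unfolding U_pot_def
  by (simp, (intro clsP_add clsP_diff clsP_mul clsP_const clsP_coord clsP_pow clsP_divrho clsP_divrho_pow clsP_uminus clsP_divc)+)

lemma clsP_gU: "clsP (\<lambda>x. grad_r (U_pot c N n n1 n2 a1 a2 \<epsilon>) (gv x) $ k)"
proof -
  have k: "k = 1 \<or> k = 2 \<or> k = 3" by (rule exhaust_3)
  have d: "\<And>x. x \<in> Phase \<Longrightarrow> U_pot c N n n1 n2 a1 a2 \<epsilon> differentiable (at (gv x))"
    using U_diff Phase_gv by blast
  from k show ?thesis
  proof (elim disjE)
    assume "k = 1" then show ?thesis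
      by (intro clsP_cong[OF clsP_pd[OF clsP_U, of 4]]) (simp add: grad_pd pd_gv_vals(4)[OF d])
  next
    assume "k = 2" then show ?thesis
      by (intro clsP_cong[OF clsP_pd[OF clsP_U, of 5]]) (simp add: grad_pd pd_gv_vals(5)[OF d])
  next
    assume "k = 3" then show ?thesis
      by (intro clsP_cong[OF clsP_pd[OF clsP_U, of 6]]) (simp add: grad_pd pd_gv_vals(6)[OF d])
  qed
qed

abbreviation "FF \<equiv> field c (mu_vec c N n n1 n2) (U_pot c N n n1 n2 a1 a2 \<epsilon>)"

lemma clsP_field: "clsP (\<lambda>x. FF x $ k)"
proof -
  have "k = 1 \<or> k = 2 \<or> k = 3 \<or> k = 4 \<or> k = 5 \<or> k = 6" by (rule exhaust_6)
  then show ?thesis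
    by (elim disjE) (simp_all add: field_def pack6_def cross3_def Iinv_def,
      (intro clsP_add clsP_diff clsP_mul clsP_const clsP_coord clsP_divc clsP_uminus clsP_mu clsP_gU)+)
qed


lemma FF_lip:
  assumes K: "compact K" "convex K" "K \<subseteq> Phase"
  shows "\<exists>L\<ge>0. \<forall>y\<in>K. \<forall>z\<in>K. norm (FF y - FF z) \<le> L * norm (y - z)"
proof -
  have "\<forall>k. \<exists>L\<ge>0. \<forall>y\<in>K. \<forall>z\<in>K. \<bar>FF y $ k - FF z $ k\<bar> \<le> L * norm (y - z)"
    using clsP_lip[OF clsP_field K] by blast
  then obtain L where L: "\<And>k. L k \<ge> 0" "\<And>k y z. y \<in> K \<Longrightarrow> z \<in> K \<Longrightarrow> \<bar>FF y $ k - FF z $ k\<bar> \<le> L k * norm (y - z)"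
    by metis
  have "norm (FF y - FF z) \<le> (\<Sum>k\<in>UNIV. L k) * norm (y - z)" if "y \<in> K" "z \<in> K" for y z
  proof -
    have "norm (FF y - FF z) \<le> (\<Sum>k\<in>UNIV. \<bar>(FF y - FF z) $ k\<bar>)" by (rule norm_le_l1_cart)
    also have "\<dots> \<le> (\<Sum>k\<in>UNIV. L k * norm (y - z))"
      using L(2)[OF that] by (intro sum_mono) simp
    finally show ?thesis by (simp add: sum_distrib_right)
  qed
  moreover have "(\<Sum>k\<in>UNIV. L k) \<ge> 0" using L(1) by (simp add: sum_nonneg)
  ultimately show ?thesis by blast
qed

lemma FF_cont: "continuous_on Phase FF"
proof -
  have "continuous_on Phase (\<lambda>x. \<chi> k. FF x $ k)"
    by (intro continuous_on_vec_lambda clsP_cont[OF clsP_field])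
  then show ?thesis by simp
qed


lemma clsP_I2: "clsP (I2_fun c N n n1 n2)"
  unfolding clsP_def using I2_cls by blast

definition GG :: "real^6 \<Rightarrow> real" where
  "GG x = frechet_derivative (I2_fun c N n n1 n2) (at x) (FF x)"

lemma GG_eq: "x \<in> Phase \<Longrightarrow> GG x = (\<Sum>j\<in>UNIV. FF x $ j * pd (I2_fun c N n n1 n2) j x)"
  unfolding GG_def by (rule fd_expand[OF clsP_diffble[OF clsP_I2]])

lemma GG_cont: "continuous_on Phase GG"
proof -
  have "clsP (\<lambda>x. \<Sum>j\<in>UNIV. FF x $ j * pd (I2_fun c N n n1 n2) j x)"
    unfolding sum_6 by (intro clsP_add clsP_mul clsP_field clsP_pd clsP_I2)
  then have "clsP GG" by (rule clsP_cong) (simp add: GG_eq)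
  then show ?thesis by (rule clsP_cont)
qed

definition x0 :: "real^6" where "x0 = vector [1, 0, 0, 0, 1, 1]"

lemma x0_nth [simp]: "x0 $ 1 = 1" "x0 $ 2 = 0" "x0 $ 3 = 0" "x0 $ 4 = 0" "x0 $ 5 = 1" "x0 $ 6 = 1"
  unfolding x0_def by simp_all

lemma gx0: "gv x0 = vector [0, 1, 1]"
  unfolding gv_def by simp

lemma x0_Phase: "x0 \<in> Phase"
  unfolding Phase_def Dset_def by simp

lemma rho_x0: "rho (gv x0) = 1"
  unfolding gx0 rho_def by simp

lemma GG_x0: "c \<noteq> 0 \<Longrightarrow> GG x0 = - 3 * N / 2"
proof -
  assume c: "c \<noteq> 0"
  have gD: "gv x0 \<in> Dset" using x0_Phase Phase_gv by blast
  show ?thesis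
  proof -
    have gI: "pd (I2_fun c N n n1 n2) j x0 = grad_r (I2_fun c N n n1 n2) x0 $ j" for j by (simp add: grad_pd)
    show ?thesis
      unfolding GG_eq[OF x0_Phase] sum_6 gI I2_grad[OF x0_Phase] phi2[OF gD] phi3[OF gD]
      using c by (simp add: field_def pack6_def cross3_def Iinv_def mu_vec_def Let_def rho_x0 field_simps)
  qed
qed


lemma I2_comp_deriv:
  assumes yd: "(y has_vector_derivative FF (y t)) (at t)" and yP: "y t \<in> Phase"
  shows "((\<lambda>s. I2_fun c N n n1 n2 (y s)) has_real_derivative GG (y t)) (at t)"
proof -
  let ?D = "frechet_derivative (I2_fun c N n n1 n2) (at (y t))"
  have hI: "(I2_fun c N n n1 n2 has_derivative ?D) (at (y t))"
    using clsP_diffble[OF clsP_I2 yP] frechet_derivative_works by blast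
  have lin: "linear ?D" using hI has_derivative_linear by blast
  have hy: "(y has_derivative (\<lambda>s. s *\<^sub>R FF (y t))) (at t)"
    using yd unfolding has_vector_derivative_def .
  have "((\<lambda>s. I2_fun c N n n1 n2 (y s)) has_derivative (\<lambda>s. ?D (s *\<^sub>R FF (y t)))) (at t)"
    using has_derivative_compose[OF hy hI] by (simp add: o_def)
  moreover have "(\<lambda>s. ?D (s *\<^sub>R FF (y t))) = (*) (GG (y t))"
    unfolding GG_def using lin by (auto simp: linear_scale mult.commute)
  ultimately show ?thesis unfolding has_field_derivative_def by simp
qed

theorem partA:
  assumes c: "c > 0" and N: "N \<noteq> 0"
  shows "\<not> const_of_motion FF Phase (I2_fun c N n n1 n2)"
proof
  assume com: "const_of_motion FF Phase (I2_fun c N n n1 n2)"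
  have G0: "GG x0 \<noteq> 0" using GG_x0 c N by simp
  have "continuous (at x0) GG"
    using GG_cont open_Phase x0_Phase continuous_on_eq_continuous_at by blast
  then obtain e1 where e1: "e1 > 0" "\<And>x. dist x x0 < e1 \<Longrightarrow> dist (GG x) (GG x0) < \<bar>GG x0\<bar>"
    using G0 unfolding continuous_at_eps_delta by (metis zero_less_abs_iff)
  obtain e2 where e2: "e2 > 0" "ball x0 e2 \<subseteq> Phase" using open_Phase x0_Phase open_contains_ball by blast
  define e where "e = min e1 e2"
  have e: "e > 0" unfolding e_def using e1 e2 by simp
  have inB: "x \<in> Phase \<and> GG x \<noteq> 0" if "norm (x - x0) < e" for x
  proof
    have "dist x0 x < e2" using that unfolding e_def by (simp add: dist_norm norm_minus_commute)
    then show "x \<in> Phase" using e2 by auto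
    have "dist x x0 < e1" using that unfolding e_def by (simp add: dist_norm)
    then have "dist (GG x) (GG x0) < \<bar>GG x0\<bar>" using e1 by blast
    then show "GG x \<noteq> 0" by (auto simp: dist_real_def)
  qed
  define d where "d = e / 7"
  have d: "d > 0" unfolding d_def using e by simp
  define a where "a = x0 - (\<chi> i. d)"
  define b where "b = x0 + (\<chi> i. d)"
  define K where "K = cbox a b"
  have memK: "x \<in> K \<longleftrightarrow> (\<forall>i. \<bar>x $ i - x0 $ i\<bar> \<le> d)" for x
    unfolding K_def a_def b_def mem_box_cart by (auto simp: abs_le_iff algebra_simps)
  have Knorm: "norm (x - x0) < e" if "x \<in> K" for x
  proof -
    have "norm (x - x0) \<le> (\<Sum>i\<in>UNIV. \<bar>(x - x0) $ i\<bar>)" by (rule norm_le_l1_cart)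
    also have "\<dots> \<le> (\<Sum>i\<in>(UNIV::6 set). d)" using that memK by (intro sum_mono) simp
    also have "\<dots> = 6 * d" by simp
    also have "\<dots> < e" unfolding d_def using e by simp
    finally show ?thesis .
  qed
  have KP: "K \<subseteq> Phase" using Knorm inB by blast
  have KG: "\<And>x. x \<in> K \<Longrightarrow> GG x \<noteq> 0" using Knorm inB by blast
  have x0K: "x0 \<in> K" using memK d by simp
  have Kc: "compact K" "convex K" unfolding K_def by (simp_all add: compact_cbox convex_box)
  obtain L where L: "L \<ge> 0" "\<And>y z. y \<in> K \<Longrightarrow> z \<in> K \<Longrightarrow> norm (FF y - FF z) \<le> L * norm (y - z)"
    using FF_lip[OF Kc KP] by blast
  have FK: "continuous_on K FF" using FF_cont KP continuous_on_subset by blast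
  obtain B0 where B0: "\<And>x. x \<in> K \<Longrightarrow> norm (FF x) \<le> B0"
    using compact_imp_bounded[OF compact_continuous_image[OF FK Kc(1)]] bounded_iff by (metis imageI)
  define B where "B = max B0 0"
  have B: "B \<ge> 0" "\<And>x. x \<in> K \<Longrightarrow> norm (FF x) \<le> B" unfolding B_def using B0 by (auto intro: le_max_iff_disj[THEN iffD2])
  have abK: "\<forall>i\<in>Basis. a \<bullet> i \<le> b \<bullet> i"
    using x0K unfolding K_def by (metis box_ne_empty(1) empty_iff)
  define Fh where "Fh z = FF (clamp a b z)" for z
  have clK: "clamp a b z \<in> K" for z unfolding K_def using abK by (simp add: clamp_in_interval)
  have Fh_cont: "continuous_on UNIV Fh"
    unfolding Fh_def using continuous_on_ext_cont[of a b FF UNIV] FK unfolding K_def ext_cont_def by simp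
  have Fh_lip: "norm (Fh y - Fh z) \<le> L * norm (y - z)" for y z
  proof -
    have "norm (Fh y - Fh z) \<le> L * norm (clamp a b y - clamp a b z)"
      unfolding Fh_def by (rule L(2)[OF clK clK])
    also have "\<dots> \<le> L * norm (y - z)"
      using dist_clamps_le_dist_args[of a b y z] L(1) by (simp add: dist_norm mult_left_mono)
    finally show ?thesis .
  qed
  have Fh_bnd: "norm (Fh y) \<le> B" for y unfolding Fh_def using B(2)[OF clK] .
  define h where "h = min (1 / (2 * (L + 1))) (d / (B + 1))"
  have h: "h > 0" unfolding h_def using L(1) B(1) d by simp
  have hL: "h * L < 1"
  proof -
    have "h * L \<le> (1 / (2 * (L + 1))) * L" unfolding h_def using L(1) by (intro mult_right_mono) auto
    also have "\<dots> < 1" using L(1) by (simp add: field_simps)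
    finally show ?thesis .
  qed
  have hB: "h * B \<le> d"
  proof -
    have "h * B \<le> (d / (B + 1)) * B" unfolding h_def using B(1) by (intro mult_right_mono) auto
    also have "\<dots> \<le> d" using B(1) d by (simp add: field_simps)
    finally show ?thesis .
  qed
  obtain y where yd: "\<And>t. t \<in> {0<..<h} \<Longrightarrow> (y has_vector_derivative Fh (y t)) (at t)"
    and yb: "\<And>t. norm (y t - x0) \<le> h * B"
    using picard_global[OF Fh_cont Fh_lip Fh_bnd h hL L(1), of x0] by blast
  have yK: "y t \<in> K" for t
  proof -
    have "\<bar>y t $ i - x0 $ i\<bar> \<le> d" for i
      using component_le_norm_cart[of "y t - x0" i] yb[of t] hB by simp
    then show ?thesis using memK by blast
  qed
  have yFh: "Fh (y t) = FF (y t)" for t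
    using yK[of t] unfolding Fh_def K_def by simp
  have sol: "is_solution FF Phase y {0<..<h}"
    unfolding is_solution_def
    using yd yK KP by (auto simp: yFh is_interval_1)
  define s1 where "s1 = h / 3"
  define s2 where "s2 = 2 * h / 3"
  have s12: "s1 < s2" "s1 \<in> {0<..<h}" "s2 \<in> {0<..<h}" unfolding s1_def s2_def using h by auto
  have eq: "I2_fun c N n n1 n2 (y s1) = I2_fun c N n n1 n2 (y s2)"
    using com sol s12 unfolding const_of_motion_def by blast
  have "\<exists>z. s1 < z \<and> z < s2 \<and> I2_fun c N n n1 n2 (y s2) - I2_fun c N n n1 n2 (y s1) = (s2 - s1) * GG (y z)"
  proof (rule MVT2[OF s12(1)])
    fix t assume t: "s1 \<le> t" "t \<le> s2"
    then have "t \<in> {0<..<h}" using s12 by auto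
    then show "((\<lambda>s. I2_fun c N n n1 n2 (y s)) has_real_derivative GG (y t)) (at t)"
      using I2_comp_deriv[of y t] yd yFh yK KP by auto
  qed
  then obtain z where z: "I2_fun c N n n1 n2 (y s2) - I2_fun c N n n1 n2 (y s1) = (s2 - s1) * GG (y z)" by blast
  then have "GG (y z) = 0" using eq s12(1) by simp
  then show False using KG[OF yK] by blast
qed

end


theorem mainTheorem10:
  fixes c N n n1 n2 a1 a2 \<epsilon> :: real
  assumes "c > 0"
  shows "(N \<noteq> 0 \<longrightarrow>
            \<not> const_of_motion (field c (mu_vec c N n n1 n2) (U_pot c N n n1 n2 a1 a2 \<epsilon>))
                Phase (I2_fun c N n n1 n2))
       \<and> (\<forall>g\<in>Dset. mu'_vec c N n n1 n2 g
                    = psi_fun c N n n1 n2 g *\<^sub>R g + grad_r (phi_fun c N n n1 n2) g)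
       \<and> is_poisson_on (Pi_mat (\<lambda>x. mu'_vec c N n n1 n2 (gv x))) Phase
       \<and> casimir_on (Pi_mat (\<lambda>x. mu'_vec c N n n1 n2 (gv x))) Phase (I2_fun c N n n1 n2)"
proof (intro conjI impI ballI)
  assume "N \<noteq> 0"
  then show "\<not> const_of_motion (field c (mu_vec c N n n1 n2) (U_pot c N n n1 n2 a1 a2 \<epsilon>))
                Phase (I2_fun c N n n1 n2)"
    using partA[OF assms] by blast
next
  fix g assume "g \<in> Dset"
  then show "mu'_vec c N n n1 n2 g = psi_fun c N n n1 n2 g *\<^sub>R g + grad_r (phi_fun c N n n1 n2) g"
    by (rule partb)
next
  show "is_poisson_on (Pi_mat (\<lambda>x. mu'_vec c N n n1 n2 (gv x))) Phase" by (rule poisson_mu')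
next
  show "casimir_on (Pi_mat (\<lambda>x. mu'_vec c N n n1 n2 (gv x))) Phase (I2_fun c N n n1 n2)" by (rule I2_casimir)
qed

end
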